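(* Let $\mathcal{E}$ be a right exact category and let $\mathcal{A}$ be a strongly right percolating subcategory of $\mathcal{E}$. Then the right multiplicative system $S_{\mathcal{A}}$ of weak isomorphisms is right weakly saturated.
   Context: A conflation category is an additive category with a class of kernel-cokernel pairs (conflations; kernel part = inflation, cokernel part = deflation) closed under isomorphism. It is right exact if $1_0$ is a deflation, deflations compose, and pullbacks of deflations along arbitrary morphisms exist and are deflations. A non-empty full subcategory $\mathcal{A}$ of $\mathcal{E}$ is right percolating if: (P1) for every conflation $A'\rightarrowtail A\twoheadrightarrow A''$, $A\in\mathcal{A}$ iff $A',A''\in\mathcal{A}$; (P2) every morphism $C\to A$ with $A\in\mathcal{A}$ factors as a deflation $C\twoheadrightarrow A'$ with $A'\in\mathcal{A}$ followed by a morphism $A'\to A$; (P3) for an inflation $C\rightarrowtail D$ and a deflation $C\twoheadrightarrow A$ with $A\in\mathcal{A}$, the pushout exists and the induced maps $A\to P$, $D\to P$ are an inflation and a deflation; (P4) for every inflation $A\rightarrowtail X$ and deflation $X\twoheadrightarrow B$ with $A,B\in\mathcal{A}$ there are $A',B'\in\mathcal{A}$, deflations $A\twoheadrightarrow A'$, $X\twoheadrightarrow B'$, an inflation $A'\rightarrowtail B'$ and a morphism $B'\to B$ with $A\rightarrowtail X\twoheadrightarrow B'$ equal to $A\twoheadrightarrow A'\rightarrowtail B'$ and $X\twoheadrightarrow B$ equal to $X\twoheadrightarrow B'\to B$. It is strongly right percolating if moreover the morphism $A'\to A$ in (P2) can always be chosen to be a monomorphism. An $\mathcal{A}^{-1}$-inflation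 is an inflation with cokernel in $\mathcal{A}$, an $\mathcal{A}^{-1}$-deflation a deflation with kernel in $\mathcal{A}$; $S_{\mathcal{A}}$ is the class of finite composites of these (it is a right multiplicative system). With $Q\colon\mathcal{E}\to S_{\mathcal{A}}^{-1}\mathcal{E}$ the localization functor, $S_{\mathcal{A}}$ is right weakly saturated if for every morphism $f$ of $\mathcal{E}$ with $Q(f)$ an isomorphism there exists $s\in S_{\mathcal{A}}$ with $f\circ s\in S_{\mathcal{A}}$. *)

theory Defs
  imports Main
begin

record ('o, 'm) category =
  Obj  :: "'o set"
  Arr  :: "'m set"
  Dom  :: "'m \<Rightarrow> 'o"
  Cod  :: "'m \<Rightarrow> 'o"
  Id   :: "'o \<Rightarrow> 'm"
  Comp :: "'m \<Rightarrow> 'm \<Rightarrow> 'm"   (* Comp g f = g \<circ> f *)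

definition hom :: "('o,'m,'x) category_scheme \<Rightarrow> 'o \<Rightarrow> 'o \<Rightarrow> 'm set" where
  "hom C a b = {f \<in> Arr C. Dom C f = a \<and> Cod C f = b}"

definition is_category :: "('o,'m,'x) category_scheme \<Rightarrow> bool" where
  "is_category C \<longleftrightarrow>
     (\<forall>f\<in>Arr C. Dom C f \<in> Obj C \<and> Cod C f \<in> Obj C) \<and>
     (\<forall>a\<in>Obj C. Id C a \<in> hom C a a) \<and>
     (\<forall>f\<in>Arr C. \<forall>g\<in>Arr C. Cod C f = Dom C g \<longrightarrow> Comp C g f \<in> hom C (Dom C f) (Cod C g)) \<and>
     (\<forall>f\<in>Arr C. Comp C f (Id C (Dom C f)) = f \<and> Comp C (Id C (Cod C f)) f = f) \<and>
     (\<forall>f\<in>Arr C. \<forall>g\<in>Arr C. \<forall>h\<in>Arr C. Cod C f = Dom C g \<longrightarrow> Cod C g = Dom C h \<longrightarrow>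
          Comp C h (Comp C g f) = Comp C (Comp C h g) f)"

definition is_iso :: "('o,'m,'x) category_scheme \<Rightarrow> 'm \<Rightarrow> bool" where
  "is_iso C f \<longleftrightarrow> f \<in> Arr C \<and>
     (\<exists>g\<in>hom C (Cod C f) (Dom C f). Comp C g f = Id C (Dom C f) \<and> Comp C f g = Id C (Cod C f))"

definition is_mono :: "('o,'m,'x) category_scheme \<Rightarrow> 'm \<Rightarrow> bool" where
  "is_mono C f \<longleftrightarrow> f \<in> Arr C \<and>
     (\<forall>g\<in>Arr C. \<forall>h\<in>Arr C. Cod C g = Dom C f \<longrightarrow> Cod C h = Dom C f \<longrightarrow> Dom C g = Dom C h \<longrightarrow>
        Comp C f g = Comp C f h \<longrightarrow> g = h)"

definition is_functor ::
  "('o,'m,'x) category_scheme \<Rightarrow> ('p,'n,'y) category_scheme \<Rightarrow> ('o \<Rightarrow> 'p) \<Rightarrow> ('m \<Rightarrow> 'n) \<Rightarrow> bool" where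
  "is_functor C D Fo Fm \<longleftrightarrow>
     (\<forall>a\<in>Obj C. Fo a \<in> Obj D) \<and>
     (\<forall>f\<in>Arr C. Fm f \<in> Arr D \<and> Dom D (Fm f) = Fo (Dom C f) \<and> Cod D (Fm f) = Fo (Cod C f)) \<and>
     (\<forall>a\<in>Obj C. Fm (Id C a) = Id D (Fo a)) \<and>
     (\<forall>f\<in>Arr C. \<forall>g\<in>Arr C. Cod C f = Dom C g \<longrightarrow> Fm (Comp C g f) = Comp D (Fm g) (Fm f))"

definition is_pullback :: "('o,'m,'x) category_scheme \<Rightarrow> 'm \<Rightarrow> 'm \<Rightarrow> 'm \<Rightarrow> 'm \<Rightarrow> bool" where
  "is_pullback C f g p q \<longleftrightarrow> f \<in> Arr C \<and> g \<in> Arr C \<and> p \<in> Arr C \<and> q \<in> Arr C \<and>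
     Cod C f = Cod C g \<and> Dom C p = Dom C q \<and> Cod C p = Dom C f \<and> Cod C q = Dom C g \<and>
     Comp C f p = Comp C g q \<and>
     (\<forall>p'\<in>Arr C. \<forall>q'\<in>Arr C. Dom C p' = Dom C q' \<longrightarrow> Cod C p' = Dom C f \<longrightarrow> Cod C q' = Dom C g \<longrightarrow>
        Comp C f p' = Comp C g q' \<longrightarrow>
        (\<exists>!h. h \<in> hom C (Dom C p') (Dom C p) \<and> Comp C p h = p' \<and> Comp C q h = q'))"

definition is_pushout :: "('o,'m,'x) category_scheme \<Rightarrow> 'm \<Rightarrow> 'm \<Rightarrow> 'm \<Rightarrow> 'm \<Rightarrow> bool" where
  "is_pushout C f g p q \<longleftrightarrow> f \<in> Arr C \<and> g \<in> Arr C \<and> p \<in> Arr C \<and> q \<in> Arr C \<and>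
     Dom C f = Dom C g \<and> Cod C p = Cod C q \<and> Cod C f = Dom C p \<and> Cod C g = Dom C q \<and>
     Comp C p f = Comp C q g \<and>
     (\<forall>p'\<in>Arr C. \<forall>q'\<in>Arr C. Cod C p' = Cod C q' \<longrightarrow> Dom C p' = Cod C f \<longrightarrow> Dom C q' = Cod C g \<longrightarrow>
        Comp C p' f = Comp C q' g \<longrightarrow>
        (\<exists>!h. h \<in> hom C (Cod C p) (Cod C p') \<and> Comp C h p = p' \<and> Comp C h q = q'))"

record ('o, 'm) addcat = "('o, 'm) category" +
  Add  :: "'m \<Rightarrow> 'm \<Rightarrow> 'm"
  Zero :: "'o \<Rightarrow> 'o \<Rightarrow> 'm"
  Neg  :: "'m \<Rightarrow> 'm"

definition zero_object :: "('o,'m,'x) category_scheme \<Rightarrow> 'o \<Rightarrow> bool" where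
  "zero_object C z \<longleftrightarrow> z \<in> Obj C \<and>
     (\<forall>a\<in>Obj C. (\<exists>!f. f \<in> hom C a z) \<and> (\<exists>!f. f \<in> hom C z a))"

definition is_additive :: "('o,'m,'x) addcat_scheme \<Rightarrow> bool" where
  "is_additive C \<longleftrightarrow> is_category C \<and>
     \<comment> \<open>each Hom(a,b) is an abelian group\<close>
     (\<forall>a\<in>Obj C. \<forall>b\<in>Obj C. Zero C a b \<in> hom C a b \<and>
        (\<forall>f\<in>hom C a b. Neg C f \<in> hom C a b \<and> Add C f (Zero C a b) = f \<and> Add C f (Neg C f) = Zero C a b) \<and>
        (\<forall>f\<in>hom C a b. \<forall>g\<in>hom C a b. Add C f g \<in> hom C a b \<and> Add C f g = Add C g f) \<and>
        (\<forall>f\<in>hom C a b. \<forall>g\<in>hom C a b. \<forall>h\<in>hom C a b. Add C (Add C f g) h = Add C f (Add C g h))) \<and>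
     \<comment> \<open>composition is bilinear\<close>
     (\<forall>a\<in>Obj C. \<forall>b\<in>Obj C. \<forall>c\<in>Obj C.
        (\<forall>f\<in>hom C a b. \<forall>f'\<in>hom C a b. \<forall>g\<in>hom C b c. Comp C g (Add C f f') = Add C (Comp C g f) (Comp C g f')) \<and>
        (\<forall>f\<in>hom C a b. \<forall>g\<in>hom C b c. \<forall>g'\<in>hom C b c. Comp C (Add C g g') f = Add C (Comp C g f) (Comp C g' f))) \<and>
     \<comment> \<open>zero object\<close>
     (\<exists>z. zero_object C z) \<and>
     \<comment> \<open>binary biproducts\<close>
     (\<forall>a\<in>Obj C. \<forall>b\<in>Obj C. \<exists>c\<in>Obj C. \<exists>p1\<in>hom C c a. \<exists>p2\<in>hom C c b. \<exists>i1\<in>hom C a c. \<exists>i2\<in>hom C b c.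
        Comp C p1 i1 = Id C a \<and> Comp C p2 i2 = Id C b \<and>
        Comp C p2 i1 = Zero C a b \<and> Comp C p1 i2 = Zero C b a \<and>
        Add C (Comp C i1 p1) (Comp C i2 p2) = Id C c)"

definition is_kernel :: "('o,'m,'x) addcat_scheme \<Rightarrow> 'm \<Rightarrow> 'm \<Rightarrow> bool" where
  "is_kernel C k p \<longleftrightarrow> k \<in> Arr C \<and> p \<in> Arr C \<and> Cod C k = Dom C p \<and>
     Comp C p k = Zero C (Dom C k) (Cod C p) \<and>
     (\<forall>g\<in>Arr C. Cod C g = Dom C p \<longrightarrow> Comp C p g = Zero C (Dom C g) (Cod C p) \<longrightarrow>
        (\<exists>!h. h \<in> hom C (Dom C g) (Dom C k) \<and> Comp C k h = g))"

definition is_cokernel :: "('o,'m,'x) addcat_scheme \<Rightarrow> 'm \<Rightarrow> 'm \<Rightarrow> bool" where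
  "is_cokernel C c i \<longleftrightarrow> c \<in> Arr C \<and> i \<in> Arr C \<and> Cod C i = Dom C c \<and>
     Comp C c i = Zero C (Dom C i) (Cod C c) \<and>
     (\<forall>g\<in>Arr C. Dom C g = Cod C i \<longrightarrow> Comp C g i = Zero C (Dom C i) (Cod C g) \<longrightarrow>
        (\<exists>!h. h \<in> hom C (Cod C c) (Cod C g) \<and> Comp C h c = g))"

definition kernel_cokernel_pair :: "('o,'m,'x) addcat_scheme \<Rightarrow> 'm \<Rightarrow> 'm \<Rightarrow> bool" where
  "kernel_cokernel_pair C i p \<longleftrightarrow> is_kernel C i p \<and> is_cokernel C p i"

definition conflation_category :: "('o,'m,'x) addcat_scheme \<Rightarrow> ('m \<times> 'm) set \<Rightarrow> bool" where
  "conflation_category C Conf \<longleftrightarrow> is_additive C \<and>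
     (\<forall>(i,p)\<in>Conf. kernel_cokernel_pair C i p) \<and>
     \<comment> \<open>closed under isomorphisms of sequences\<close>
     (\<forall>(i,p)\<in>Conf. \<forall>i'\<in>Arr C. \<forall>p'\<in>Arr C. \<forall>a b c.
        Cod C i' = Dom C p' \<longrightarrow>
        a \<in> hom C (Dom C i) (Dom C i') \<longrightarrow> b \<in> hom C (Cod C i) (Cod C i') \<longrightarrow>
        c \<in> hom C (Cod C p) (Cod C p') \<longrightarrow>
        is_iso C a \<longrightarrow> is_iso C b \<longrightarrow> is_iso C c \<longrightarrow>
        Comp C b i = Comp C i' a \<longrightarrow> Comp C c p = Comp C p' b \<longrightarrow> (i', p') \<in> Conf)"

definition inflation :: "('m \<times> 'm) set \<Rightarrow> 'm \<Rightarrow> bool" where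
  "inflation Conf i \<longleftrightarrow> (\<exists>p. (i, p) \<in> Conf)"

definition deflation :: "('m \<times> 'm) set \<Rightarrow> 'm \<Rightarrow> bool" where
  "deflation Conf p \<longleftrightarrow> (\<exists>i. (i, p) \<in> Conf)"

definition right_exact :: "('o,'m,'x) addcat_scheme \<Rightarrow> ('m \<times> 'm) set \<Rightarrow> bool" where
  "right_exact C Conf \<longleftrightarrow> conflation_category C Conf \<and>
     \<comment> \<open>R0\<close>
     (\<forall>z. zero_object C z \<longrightarrow> deflation Conf (Id C z)) \<and>
     \<comment> \<open>R1\<close>
     (\<forall>p q. deflation Conf p \<longrightarrow> deflation Conf q \<longrightarrow> Cod C p = Dom C q \<longrightarrow> deflation Conf (Comp C q p)) \<and>
     \<comment> \<open>R2: pullback of a deflation p : Y \<rightarrow> Z along f : Z' \<rightarrow> Z exists and p' : P \<rightarrow> Z' is a deflation\<close>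
     (\<forall>p f. deflation Conf p \<longrightarrow> f \<in> Arr C \<longrightarrow> Cod C f = Cod C p \<longrightarrow>
        (\<exists>f' p'. is_pullback C p f f' p' \<and> deflation Conf p'))"

definition right_percolating_P2 :: "('o,'m,'x) addcat_scheme \<Rightarrow> ('m \<times> 'm) set \<Rightarrow> 'o set \<Rightarrow> bool" where
  "right_percolating_P2 C Conf A \<longleftrightarrow>
     (\<forall>f\<in>Arr C. Cod C f \<in> A \<longrightarrow>
        (\<exists>p g. deflation Conf p \<and> Dom C p = Dom C f \<and> Cod C p \<in> A \<and>
               g \<in> hom C (Cod C p) (Cod C f) \<and> Comp C g p = f))"

definition strong_P2 :: "('o,'m,'x) addcat_scheme \<Rightarrow> ('m \<times> 'm) set \<Rightarrow> 'o set \<Rightarrow> bool" where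
  "strong_P2 C Conf A \<longleftrightarrow>
     (\<forall>f\<in>Arr C. Cod C f \<in> A \<longrightarrow>
        (\<exists>p g. deflation Conf p \<and> Dom C p = Dom C f \<and> Cod C p \<in> A \<and>
               g \<in> hom C (Cod C p) (Cod C f) \<and> Comp C g p = f \<and> is_mono C g))"

definition right_percolating :: "('o,'m,'x) addcat_scheme \<Rightarrow> ('m \<times> 'm) set \<Rightarrow> 'o set \<Rightarrow> bool" where
  "right_percolating C Conf A \<longleftrightarrow> A \<noteq> {} \<and> A \<subseteq> Obj C \<and>
     \<comment> \<open>P1\<close>
     (\<forall>(i,p)\<in>Conf. Cod C i \<in> A \<longleftrightarrow> (Dom C i \<in> A \<and> Cod C p \<in> A)) \<and>
     \<comment> \<open>P2\<close>
     right_percolating_P2 C Conf A \<and>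
     \<comment> \<open>P3: for inflation i : C' \<rightarrow> D, deflation p : C' \<rightarrow> A0 (A0 in A), pushout with i' : A0 \<rightarrow> P, p' : D \<rightarrow> P\<close>
     (\<forall>i p. inflation Conf i \<longrightarrow> deflation Conf p \<longrightarrow> Dom C i = Dom C p \<longrightarrow> Cod C p \<in> A \<longrightarrow>
        (\<exists>i' p'. is_pushout C p i i' p' \<and> inflation Conf i' \<and> deflation Conf p')) \<and>
     \<comment> \<open>P4\<close>
     (\<forall>i p. inflation Conf i \<longrightarrow> deflation Conf p \<longrightarrow> Cod C i = Dom C p \<longrightarrow>
        Dom C i \<in> A \<longrightarrow> Cod C p \<in> A \<longrightarrow>
        (\<exists>d1 d2 j m. deflation Conf d1 \<and> deflation Conf d2 \<and> inflation Conf j \<and> m \<in> Arr C \<and>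
           Dom C d1 = Dom C i \<and> Cod C d1 \<in> A \<and> Dom C d2 = Cod C i \<and> Cod C d2 \<in> A \<and>
           Dom C j = Cod C d1 \<and> Cod C j = Cod C d2 \<and>
           Dom C m = Cod C d2 \<and> Cod C m = Cod C p \<and>
           Comp C d2 i = Comp C j d1 \<and> p = Comp C m d2))"

definition strongly_right_percolating :: "('o,'m,'x) addcat_scheme \<Rightarrow> ('m \<times> 'm) set \<Rightarrow> 'o set \<Rightarrow> bool" where
  "strongly_right_percolating C Conf A \<longleftrightarrow> right_percolating C Conf A \<and> strong_P2 C Conf A"

definition A_inflation :: "('o,'m,'x) addcat_scheme \<Rightarrow> ('m \<times> 'm) set \<Rightarrow> 'o set \<Rightarrow> 'm \<Rightarrow> bool" where
  "A_inflation C Conf A i \<longleftrightarrow> (\<exists>p. (i, p) \<in> Conf \<and> Cod C p \<in> A)"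

definition A_deflation :: "('o,'m,'x) addcat_scheme \<Rightarrow> ('m \<times> 'm) set \<Rightarrow> 'o set \<Rightarrow> 'm \<Rightarrow> bool" where
  "A_deflation C Conf A p \<longleftrightarrow> (\<exists>i. (i, p) \<in> Conf \<and> Dom C i \<in> A)"

inductive_set S_A :: "('o,'m,'x) addcat_scheme \<Rightarrow> ('m \<times> 'm) set \<Rightarrow> 'o set \<Rightarrow> 'm set"
  for C Conf A where
  inf: "A_inflation C Conf A s \<Longrightarrow> s \<in> S_A C Conf A"
| defl: "A_deflation C Conf A s \<Longrightarrow> s \<in> S_A C Conf A"
| comp: "s \<in> S_A C Conf A \<Longrightarrow> t \<in> S_A C Conf A \<Longrightarrow> Cod C s = Dom C t \<Longrightarrow> Comp C t s \<in> S_A C Conf A"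

text \<open>Q(f) is an isomorphism in the localization S^-1 C iff every functor inverting S sends f to
  an isomorphism (universal property of Q). The target categories range over a type large enough
  to contain the (Gabriel-Zisman) localization: objects 'o, morphisms sets of zigzag paths.\<close>

definition localization_iso :: "('o,'m,'x) category_scheme \<Rightarrow> 'm set \<Rightarrow> 'm \<Rightarrow> bool" where
  "localization_iso C S f \<longleftrightarrow>
     (\<forall>(D :: ('o, ('o \<times> 'o \<times> ('m \<times> bool) list) set) category) Fo Fm.
        is_category D \<longrightarrow> is_functor C D Fo Fm \<longrightarrow> (\<forall>s\<in>S. is_iso D (Fm s)) \<longrightarrow> is_iso D (Fm f))"

definition right_weakly_saturated :: "('o,'m,'x) category_scheme \<Rightarrow> 'm set \<Rightarrow> bool" where
  "right_weakly_saturated C S \<longleftrightarrow>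
     (\<forall>f\<in>Arr C. localization_iso C S f \<longrightarrow> (\<exists>s\<in>S. Cod C s = Dom C f \<and> Comp C f s \<in> S))"

end

theory Submission
  imports Defs
begin


definition enc :: "('m \<times> 'm) \<Rightarrow> ('m \<times> 'm) \<Rightarrow> ('m \<times> bool) list" where
  "enc p q = [(fst p, True), (snd p, True), (fst q, True), (snd q, True)]"

lemma enc_inj: "enc p q = enc p' q' \<longleftrightarrow> p = p' \<and> q = q'"
  unfolding enc_def by (cases p; cases q; cases p'; cases q') auto

lemma enc_ne: "enc p q \<noteq> []" unfolding enc_def by simp

definition mk :: "'o \<Rightarrow> 'o \<Rightarrow> (('m \<times> 'm) \<times> ('m \<times> 'm)) set \<Rightarrow> ('o \<times> 'o \<times> ('m \<times> bool) list) set" where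
  "mk X X' R = insert (X, X', []) {(X, X', enc p q) | p q. (p, q) \<in> R}"

definition relof :: "('o \<times> 'o \<times> ('m \<times> bool) list) set \<Rightarrow> (('m \<times> 'm) \<times> ('m \<times> 'm)) set" where
  "relof M = {(p, q). \<exists>x y. (x, y, enc p q) \<in> M}"

definition domM :: "('o \<times> 'o \<times> ('m \<times> bool) list) set \<Rightarrow> 'o" where
  "domM M = fst (SOME e. e \<in> M)"
definition codM :: "('o \<times> 'o \<times> ('m \<times> bool) list) set \<Rightarrow> 'o" where
  "codM M = fst (snd (SOME e. e \<in> M))"

lemma relof_mk[simp]: "relof (mk X X' R) = R"
  unfolding relof_def mk_def by (auto simp: enc_inj enc_ne)

lemma domM_mk[simp]: "domM (mk X X' R) = X"
proof -
  have "(SOME e. e \<in> mk X X' R) \<in> mk X X' R" by (rule someI[of _ "(X, X', [])"]) (simp add: mk_def)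
  then show ?thesis unfolding domM_def mk_def by auto
qed

lemma codM_mk[simp]: "codM (mk X X' R) = X'"
proof -
  have "(SOME e. e \<in> mk X X' R) \<in> mk X X' R" by (rule someI[of _ "(X, X', [])"]) (simp add: mk_def)
  then show ?thesis unfolding codM_def mk_def by auto
qed

lemma mk_eq_iff: "mk X X' R = mk Z Z' R' \<longleftrightarrow> X = Z \<and> X' = Z' \<and> R = R'"
  by (metis codM_mk domM_mk relof_mk)

definition sat where
  "sat P eqv X X' R \<longleftrightarrow> R \<subseteq> P X \<times> P X' \<and>
     (\<forall>p q p' q'. (p, q) \<in> R \<longrightarrow> eqv p' p \<longrightarrow> eqv q q' \<longrightarrow> (p', q') \<in> R)"

definition eqvon where "eqvon P eqv X = {(p, q). p \<in> P X \<and> q \<in> P X \<and> eqv p q}"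

definition RC :: "'o set \<Rightarrow> ('o \<Rightarrow> ('m \<times> 'm) set) \<Rightarrow> (('m \<times> 'm) \<Rightarrow> ('m \<times> 'm) \<Rightarrow> bool)
   \<Rightarrow> ('o, ('o \<times> 'o \<times> ('m \<times> bool) list) set) category" where
  "RC Ob P eqv = \<lparr>Obj = Ob, Arr = {mk X X' R | X X' R. X \<in> Ob \<and> X' \<in> Ob \<and> sat P eqv X X' R},
     Dom = domM, Cod = codM, Id = (\<lambda>X. mk X X (eqvon P eqv X)),
     Comp = (\<lambda>M2 M1. mk (domM M1) (codM M2) (relof M1 O relof M2))\<rparr>"

locale relcat =
  fixes Ob :: "'o set" and P :: "'o \<Rightarrow> ('m \<times> 'm) set" and eqv :: "('m \<times> 'm) \<Rightarrow> ('m \<times> 'm) \<Rightarrow> bool"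
  assumes refl: "X \<in> Ob \<Longrightarrow> p \<in> P X \<Longrightarrow> eqv p p"
    and sym: "eqv p q \<Longrightarrow> eqv q p"
    and trans: "eqv p q \<Longrightarrow> eqv q r \<Longrightarrow> eqv p r"
    and closed: "eqv p q \<Longrightarrow> p \<in> P X \<Longrightarrow> q \<in> P X"
begin

abbreviation "D \<equiv> RC Ob P eqv"

lemma D_simps[simp]: "Obj D = Ob" "Dom D = domM" "Cod D = codM" "Id D X = mk X X (eqvon P eqv X)"
  "Comp D M2 M1 = mk (domM M1) (codM M2) (relof M1 O relof M2)"
  by (simp_all add: RC_def)

lemma Arr_D: "M \<in> Arr D \<longleftrightarrow> (\<exists>X X' R. M = mk X X' R \<and> X \<in> Ob \<and> X' \<in> Ob \<and> sat P eqv X X' R)"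
  by (auto simp: RC_def)

lemma mk_in_hom: "X \<in> Ob \<Longrightarrow> X' \<in> Ob \<Longrightarrow> sat P eqv X X' R \<Longrightarrow> mk X X' R \<in> hom D X X'"
  unfolding hom_def by (auto simp: Arr_D)

lemma sat_eqvon: "sat P eqv X X (eqvon P eqv X)"
  unfolding sat_def eqvon_def by (auto intro: trans sym closed dest: sym)

lemma sat_comp: assumes Y: "Y \<in> Ob" shows "sat P eqv X Y R1 \<Longrightarrow> sat P eqv Y Z R2 \<Longrightarrow> sat P eqv X Z (R1 O R2)"
  unfolding sat_def
proof (intro conjI allI impI)
  assume a: "R1 \<subseteq> P X \<times> P Y \<and> (\<forall>p q p' q'. (p, q) \<in> R1 \<longrightarrow> eqv p' p \<longrightarrow> eqv q q' \<longrightarrow> (p', q') \<in> R1)"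
    and b: "R2 \<subseteq> P Y \<times> P Z \<and> (\<forall>p q p' q'. (p, q) \<in> R2 \<longrightarrow> eqv p' p \<longrightarrow> eqv q q' \<longrightarrow> (p', q') \<in> R2)"
  show "R1 O R2 \<subseteq> P X \<times> P Z" using a b by blast
  fix p q p' q' assume "(p, q) \<in> R1 O R2" "eqv p' p" "eqv q q'"
  then obtain m where m: "(p, m) \<in> R1" "(m, q) \<in> R2" by blast
  have "m \<in> P Y" using m a by blast
  have "eqv m m" using \<open>m \<in> P Y\<close> sym trans by (meson refl Y)
  have "(p', m) \<in> R1" using a m(1) \<open>eqv p' p\<close> \<open>eqv m m\<close> by blast
  moreover have "(m, q') \<in> R2" using b m(2) \<open>eqv q q'\<close> \<open>eqv m m\<close> by blast
  ultimately show "(p', q') \<in> R1 O R2" by blast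
qed

lemma sat_refl1: "X \<in> Ob \<Longrightarrow> sat P eqv X X' R \<Longrightarrow> (p, q) \<in> R \<Longrightarrow> eqv p p"
  unfolding sat_def by (meson mem_Sigma_iff subsetD refl)
lemma sat_refl2: "X' \<in> Ob \<Longrightarrow> sat P eqv X X' R \<Longrightarrow> (p, q) \<in> R \<Longrightarrow> eqv q q"
  unfolding sat_def by (meson mem_Sigma_iff subsetD refl)
lemma sat_in: "sat P eqv X X' R \<Longrightarrow> (p, q) \<in> R \<Longrightarrow> p \<in> P X \<and> q \<in> P X'"
  unfolding sat_def by blast
lemma sat_cl: "sat P eqv X X' R \<Longrightarrow> (p, q) \<in> R \<Longrightarrow> eqv p' p \<Longrightarrow> eqv q q' \<Longrightarrow> (p', q') \<in> R"
  unfolding sat_def by blast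

lemma eqvon_comp: "X \<in> Ob \<Longrightarrow> X' \<in> Ob \<Longrightarrow> sat P eqv X X' R \<Longrightarrow> eqvon P eqv X O R = R"
proof (intro set_eqI iffI)
  fix x assume as: "X \<in> Ob" "X' \<in> Ob" "sat P eqv X X' R" "x \<in> eqvon P eqv X O R"
  then obtain p m q where "x = (p, q)" "(p, m) \<in> eqvon P eqv X" "(m, q) \<in> R" by blast
  then have "eqv p m" "eqv q q" using as sat_refl2 unfolding eqvon_def by auto
  then show "x \<in> R" using sat_cl[OF as(3) \<open>(m, q) \<in> R\<close>, of p q] \<open>x = (p, q)\<close> by simp
next
  fix x assume as: "X \<in> Ob" "X' \<in> Ob" "sat P eqv X X' R" "x \<in> R"
  obtain p q where x: "x = (p, q)" by (cases x) auto
  have "p \<in> P X" "eqv p p" using as sat_in sat_refl1 x by blast+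
  then have "(p, p) \<in> eqvon P eqv X" unfolding eqvon_def by simp
  then show "x \<in> eqvon P eqv X O R" using as x by blast
qed

lemma comp_eqvon: "X \<in> Ob \<Longrightarrow> X' \<in> Ob \<Longrightarrow> sat P eqv X X' R \<Longrightarrow> R O eqvon P eqv X' = R"
proof (intro set_eqI iffI)
  fix x assume as: "X \<in> Ob" "X' \<in> Ob" "sat P eqv X X' R" "x \<in> R O eqvon P eqv X'"
  then obtain p m q where "x = (p, q)" "(p, m) \<in> R" "(m, q) \<in> eqvon P eqv X'" by blast
  then have "eqv m q" "eqv p p" using as sat_refl1 unfolding eqvon_def by auto
  then show "x \<in> R" using sat_cl[OF as(3) \<open>(p, m) \<in> R\<close>, of p q] \<open>x = (p, q)\<close> by simp
next
  fix x assume as: "X \<in> Ob" "X' \<in> Ob" "sat P eqv X X' R" "x \<in> R"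
  obtain p q where x: "x = (p, q)" by (cases x) auto
  have "q \<in> P X'" "eqv q q" using as sat_in sat_refl2 x by blast+
  then have "(q, q) \<in> eqvon P eqv X'" unfolding eqvon_def by simp
  then show "x \<in> R O eqvon P eqv X'" using as x by blast
qed

lemma arrE: assumes "f \<in> Arr D"
  obtains X X' R where "f = mk X X' R" "X \<in> Ob" "X' \<in> Ob" "sat P eqv X X' R"
  using assms Arr_D by blast

lemma is_cat: "is_category D"
proof -
  have 1: "\<forall>f\<in>Arr D. Dom D f \<in> Obj D \<and> Cod D f \<in> Obj D"
  proof
    fix f assume "f \<in> Arr D" then show "Dom D f \<in> Obj D \<and> Cod D f \<in> Obj D"
      by (rule arrE) simp
  qed
  have 2: "\<forall>a\<in>Obj D. Id D a \<in> hom D a a"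
  proof
    fix a assume "a \<in> Obj D" then show "Id D a \<in> hom D a a"
      using mk_in_hom sat_eqvon by simp
  qed
  have 3: "\<forall>f\<in>Arr D. \<forall>g\<in>Arr D. Cod D f = Dom D g \<longrightarrow> Comp D g f \<in> hom D (Dom D f) (Cod D g)"
  proof (intro ballI impI)
    fix f g assume "f \<in> Arr D" "g \<in> Arr D" "Cod D f = Dom D g"
    from \<open>f \<in> Arr D\<close> obtain X X' R where f: "f = mk X X' R" "X \<in> Ob" "X' \<in> Ob" "sat P eqv X X' R" by (rule arrE)
    from \<open>g \<in> Arr D\<close> obtain Y Y' R' where g: "g = mk Y Y' R'" "Y \<in> Ob" "Y' \<in> Ob" "sat P eqv Y Y' R'" by (rule arrE)
    have "Y = X'" using \<open>Cod D f = Dom D g\<close> f g by simp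
    then have "sat P eqv X Y' (R O R')" using sat_comp f g by blast
    then show "Comp D g f \<in> hom D (Dom D f) (Cod D g)" using f g mk_in_hom by simp
  qed
  have 4: "\<forall>f\<in>Arr D. Comp D f (Id D (Dom D f)) = f \<and> Comp D (Id D (Cod D f)) f = f"
  proof
    fix f assume "f \<in> Arr D"
    then obtain X X' R where f: "f = mk X X' R" "X \<in> Ob" "X' \<in> Ob" "sat P eqv X X' R" by (rule arrE)
    show "Comp D f (Id D (Dom D f)) = f \<and> Comp D (Id D (Cod D f)) f = f"
      using f eqvon_comp[OF f(2,3,4)] comp_eqvon[OF f(2,3,4)] by simp
  qed
  have 5: "\<forall>f\<in>Arr D. \<forall>g\<in>Arr D. \<forall>h\<in>Arr D. Cod D f = Dom D g \<longrightarrow> Cod D g = Dom D h \<longrightarrow>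
          Comp D h (Comp D g f) = Comp D (Comp D h g) f"
    by (simp add: O_assoc)
  show ?thesis unfolding is_category_def using 1 2 3 4 5 by (intro conjI)
qed

end




lemma gc_comp: "is_category C \<Longrightarrow> f \<in> hom C X Y \<Longrightarrow> g \<in> hom C Y W \<Longrightarrow> Comp C g f \<in> hom C X W"
  unfolding is_category_def hom_def by auto
lemma gc_assoc: "is_category C \<Longrightarrow> f \<in> hom C X Y \<Longrightarrow> g \<in> hom C Y W \<Longrightarrow> h \<in> hom C W V \<Longrightarrow>
   Comp C h (Comp C g f) = Comp C (Comp C h g) f"
  unfolding is_category_def hom_def by auto
lemma gc_idl: "is_category C \<Longrightarrow> f \<in> hom C X Y \<Longrightarrow> Comp C (Id C Y) f = f"
  unfolding is_category_def hom_def by auto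
lemma gc_idr: "is_category C \<Longrightarrow> f \<in> hom C X Y \<Longrightarrow> Comp C f (Id C X) = f"
  unfolding is_category_def hom_def by auto
lemma gc_id: "is_category C \<Longrightarrow> X \<in> Obj C \<Longrightarrow> Id C X \<in> hom C X X"
  unfolding is_category_def by auto
lemma gc_obj: "is_category C \<Longrightarrow> f \<in> hom C X Y \<Longrightarrow> X \<in> Obj C \<and> Y \<in> Obj C"
  unfolding is_category_def hom_def by auto

lemma gc_iso_D: assumes "is_iso C a" "a \<in> hom C X Y"
  obtains a' where "a' \<in> hom C Y X" "Comp C a' a = Id C X" "Comp C a a' = Id C Y"
proof -
  have "\<exists>g\<in>hom C (Cod C a) (Dom C a). Comp C g a = Id C (Dom C a) \<and> Comp C a g = Id C (Cod C a)"
    using assms(1) unfolding is_iso_def by blast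
  moreover have "Dom C a = X" "Cod C a = Y" using assms(2) unfolding hom_def by simp_all
  ultimately have "\<exists>g\<in>hom C Y X. Comp C g a = Id C X \<and> Comp C a g = Id C Y" by simp
  then show ?thesis using that by blast
qed

lemma gc_iso_I: "a \<in> hom C X Y \<Longrightarrow> b \<in> hom C Y X \<Longrightarrow> Comp C b a = Id C X \<Longrightarrow> Comp C a b = Id C Y \<Longrightarrow> is_iso C a"
  unfolding is_iso_def hom_def by auto

lemma gc_rinv: assumes C: "is_category C" and "is_iso C a" "a \<in> hom C X Y" "b \<in> hom C Y X" "Comp C a b = Id C Y"
  shows "Comp C b a = Id C X"
proof -
  obtain a' where a': "a' \<in> hom C Y X" "Comp C a' a = Id C X" "Comp C a a' = Id C Y"
    using gc_iso_D[OF assms(2,3)] by blast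
  have "a' = Comp C a' (Id C Y)" using gc_idr[OF C a'(1)] by simp
  also have "\<dots> = Comp C a' (Comp C a b)" using assms(5) by simp
  also have "\<dots> = Comp C (Comp C a' a) b" using gc_assoc[OF C assms(4) assms(3) a'(1)] .
  also have "\<dots> = b" using a'(2) gc_idl[OF C assms(4)] by simp
  finally show ?thesis using a'(2) by simp
qed

lemma gc_iso_comp: assumes C: "is_category C" and "is_iso C a" "is_iso C b" "a \<in> hom C X Y" "b \<in> hom C Y W"
  shows "is_iso C (Comp C b a)"
proof -
  obtain a' where a': "a' \<in> hom C Y X" "Comp C a' a = Id C X" "Comp C a a' = Id C Y"
    using gc_iso_D[OF assms(2,4)] by blast
  obtain b' where b': "b' \<in> hom C W Y" "Comp C b' b = Id C Y" "Comp C b b' = Id C W"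
    using gc_iso_D[OF assms(3,5)] by blast
  have 1: "Comp C (Comp C a' b') (Comp C b a) = Id C X"
  proof -
    have "Comp C (Comp C a' b') (Comp C b a) = Comp C a' (Comp C b' (Comp C b a))"
      using gc_assoc[OF C gc_comp[OF C assms(4,5)] b'(1) a'(1)] by simp
    also have "\<dots> = Comp C a' (Comp C (Comp C b' b) a)" using gc_assoc[OF C assms(4,5) b'(1)] by simp
    also have "\<dots> = Id C X" using b'(2) gc_idl[OF C assms(4)] a'(2) by simp
    finally show ?thesis .
  qed
  have 2: "Comp C (Comp C b a) (Comp C a' b') = Id C W"
  proof -
    have "Comp C (Comp C b a) (Comp C a' b') = Comp C b (Comp C a (Comp C a' b'))"
      using gc_assoc[OF C gc_comp[OF C b'(1) a'(1)] assms(4,5)] by simp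
    also have "\<dots> = Comp C b (Comp C (Comp C a a') b')" using gc_assoc[OF C b'(1) a'(1) assms(4)] by simp
    also have "\<dots> = Id C W" using a'(3) gc_idl[OF C b'(1)] b'(3) by simp
    finally show ?thesis .
  qed
  show ?thesis using gc_iso_I[OF gc_comp[OF C assms(4,5)] gc_comp[OF C b'(1) a'(1)] 1 2] .
qed

lemma gc_iso_cancel: assumes C: "is_category C" and "is_iso C a" "is_iso C (Comp C a b)" "a \<in> hom C Y W" "b \<in> hom C X Y"
  shows "is_iso C b"
proof -
  obtain a' where a': "a' \<in> hom C W Y" "Comp C a' a = Id C Y" "Comp C a a' = Id C W"
    using gc_iso_D[OF assms(2,4)] by blast
  have "is_iso C a'" using gc_iso_I[OF a'(1) assms(4) a'(3) a'(2)] .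
  then have "is_iso C (Comp C a' (Comp C a b))" using gc_iso_comp[OF C assms(3) _ gc_comp[OF C assms(5,4)] a'(1)] by blast
  moreover have "Comp C a' (Comp C a b) = b" using gc_assoc[OF C assms(5,4) a'(1)] a'(2) gc_idl[OF C assms(5)] by simp
  ultimately show ?thesis by simp
qed

lemma functor_hom: "is_functor C D Fo Fm \<Longrightarrow> f \<in> hom C X Y \<Longrightarrow> Fm f \<in> hom D (Fo X) (Fo Y)"
  unfolding is_functor_def hom_def by auto
lemma functor_comp: "is_functor C D Fo Fm \<Longrightarrow> f \<in> hom C X Y \<Longrightarrow> g \<in> hom C Y W \<Longrightarrow> Fm (Comp C g f) = Comp D (Fm g) (Fm f)"
  unfolding is_functor_def hom_def by auto
lemma functor_id: "is_functor C D Fo Fm \<Longrightarrow> X \<in> Obj C \<Longrightarrow> Fm (Id C X) = Id D (Fo X)"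
  unfolding is_functor_def by auto

locale rex =
  fixes E :: "('o, 'm) addcat" and Conf :: "('m \<times> 'm) set" and A :: "'o set"
  assumes RE: "right_exact E Conf" and SP: "strongly_right_percolating E Conf A"
begin

abbreviation cmp (infixr "\<cdot>" 75) where "g \<cdot> f \<equiv> Comp E g f"
abbreviation hm where "hm X Y \<equiv> hom E X Y"
abbreviation Z where "Z X Y \<equiv> Zero E X Y"
abbreviation ad (infixl "\<oplus>" 65) where "f \<oplus> g \<equiv> Add E f g"
abbreviation ng where "ng f \<equiv> Neg E f"
abbreviation S where "S \<equiv> S_A E Conf A"

lemma CC: "conflation_category E Conf" using RE unfolding right_exact_def by blast
lemma ADD: "is_additive E" using CC unfolding conflation_category_def by blast
lemma CAT: "is_category E" using ADD unfolding is_additive_def by blast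

lemma hom_iff: "f \<in> hm X Y \<longleftrightarrow> f \<in> Arr E \<and> Dom E f = X \<and> Cod E f = Y"
  unfolding hom_def by simp

lemma arr_hom: "f \<in> Arr E \<Longrightarrow> f \<in> hm (Dom E f) (Cod E f)"
  unfolding hom_def by simp

lemma hom_obj: "f \<in> hm X Y \<Longrightarrow> X \<in> Obj E \<and> Y \<in> Obj E"
  using CAT unfolding is_category_def hom_def by blast

lemma comp_hom: "f \<in> hm X Y \<Longrightarrow> g \<in> hm Y W \<Longrightarrow> g \<cdot> f \<in> hm X W"
  using CAT unfolding is_category_def hom_def by auto

lemma assoc: "f \<in> hm X Y \<Longrightarrow> g \<in> hm Y W \<Longrightarrow> h \<in> hm W V \<Longrightarrow> h \<cdot> (g \<cdot> f) = (h \<cdot> g) \<cdot> f"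
  using CAT unfolding is_category_def hom_def by auto

lemma id_hom: "X \<in> Obj E \<Longrightarrow> Id E X \<in> hm X X"
  using CAT unfolding is_category_def by auto

lemma id_l[simp]: "f \<in> hm X Y \<Longrightarrow> Id E Y \<cdot> f = f"
  using CAT unfolding is_category_def hom_def by auto

lemma id_r[simp]: "f \<in> hm X Y \<Longrightarrow> f \<cdot> Id E X = f"
  using CAT unfolding is_category_def hom_def by auto

lemma zero_hom: "X \<in> Obj E \<Longrightarrow> Y \<in> Obj E \<Longrightarrow> Z X Y \<in> hm X Y"
  using ADD unfolding is_additive_def by blast

lemma add_hom: "f \<in> hm X Y \<Longrightarrow> g \<in> hm X Y \<Longrightarrow> f \<oplus> g \<in> hm X Y"
  using ADD hom_obj unfolding is_additive_def by blast

lemma neg_hom: "f \<in> hm X Y \<Longrightarrow> ng f \<in> hm X Y"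
  using ADD hom_obj unfolding is_additive_def by blast

lemma add_zero: "f \<in> hm X Y \<Longrightarrow> f \<oplus> Z X Y = f"
  using ADD hom_obj unfolding is_additive_def by blast

lemma add_neg: "f \<in> hm X Y \<Longrightarrow> f \<oplus> ng f = Z X Y"
  using ADD hom_obj unfolding is_additive_def by blast

lemma add_comm: "f \<in> hm X Y \<Longrightarrow> g \<in> hm X Y \<Longrightarrow> f \<oplus> g = g \<oplus> f"
  using ADD hom_obj unfolding is_additive_def by blast

lemma add_assoc: "f \<in> hm X Y \<Longrightarrow> g \<in> hm X Y \<Longrightarrow> h \<in> hm X Y \<Longrightarrow> f \<oplus> g \<oplus> h = f \<oplus> (g \<oplus> h)"
  using ADD hom_obj unfolding is_additive_def by blast

lemma distl: "f \<in> hm X Y \<Longrightarrow> f' \<in> hm X Y \<Longrightarrow> g \<in> hm Y W \<Longrightarrow> g \<cdot> (f \<oplus> f') = g \<cdot> f \<oplus> g \<cdot> f'"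
proof -
  assume a: "f \<in> hm X Y" "f' \<in> hm X Y" "g \<in> hm Y W"
  then have "X \<in> Obj E" "Y \<in> Obj E" "W \<in> Obj E" using hom_obj by blast+
  then show ?thesis using a ADD unfolding is_additive_def by blast
qed

lemma distr: "f \<in> hm X Y \<Longrightarrow> g \<in> hm Y W \<Longrightarrow> g' \<in> hm Y W \<Longrightarrow> (g \<oplus> g') \<cdot> f = g \<cdot> f \<oplus> g' \<cdot> f"
proof -
  assume a: "f \<in> hm X Y" "g \<in> hm Y W" "g' \<in> hm Y W"
  then have "X \<in> Obj E" "Y \<in> Obj E" "W \<in> Obj E" using hom_obj by blast+
  then show ?thesis using a ADD unfolding is_additive_def by blast
qed

lemma zero_add: assumes "f \<in> hm X Y" shows "Z X Y \<oplus> f = f"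
proof -
  have "Z X Y \<in> hm X Y" using assms hom_obj zero_hom by blast
  then show ?thesis using add_comm add_zero assms by simp
qed

lemma idem_zero: assumes "x \<in> hm X Y" "x \<oplus> x = x" shows "x = Z X Y"
proof -
  have "x \<oplus> ng x = (x \<oplus> x) \<oplus> ng x" using assms by simp
  also have "\<dots> = x \<oplus> (x \<oplus> ng x)" using assms add_assoc neg_hom by blast
  finally have "Z X Y = x \<oplus> Z X Y" using assms add_neg by simp
  then show ?thesis using assms add_zero by simp
qed

lemma comp_zero_r: assumes "g \<in> hm Y W" "X \<in> Obj E" shows "g \<cdot> Z X Y = Z X W"
proof -
  have Y: "Y \<in> Obj E" "W \<in> Obj E" using assms hom_obj by blast+
  have z: "Z X Y \<in> hm X Y" using Y assms zero_hom by blast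
  have "g \<cdot> (Z X Y \<oplus> Z X Y) = g \<cdot> Z X Y \<oplus> g \<cdot> Z X Y" using distl z assms by blast
  then have "g \<cdot> Z X Y = g \<cdot> Z X Y \<oplus> g \<cdot> Z X Y" using add_zero z by simp
  moreover have "g \<cdot> Z X Y \<in> hm X W" by (rule comp_hom[OF z assms(1)])
  ultimately show ?thesis using idem_zero[of "g \<cdot> Z X Y" X W] by simp
qed

lemma comp_zero_l: assumes "f \<in> hm X Y" "W \<in> Obj E" shows "Z Y W \<cdot> f = Z X W"
proof -
  have Y: "X \<in> Obj E" "Y \<in> Obj E" using assms hom_obj by blast+
  have z: "Z Y W \<in> hm Y W" using Y assms zero_hom by blast
  have "(Z Y W \<oplus> Z Y W) \<cdot> f = Z Y W \<cdot> f \<oplus> Z Y W \<cdot> f" using distr z assms by blast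
  then have "Z Y W \<cdot> f = Z Y W \<cdot> f \<oplus> Z Y W \<cdot> f" using add_zero z by simp
  moreover have "Z Y W \<cdot> f \<in> hm X W" by (rule comp_hom[OF assms(1) z])
  ultimately show ?thesis using idem_zero[of "Z Y W \<cdot> f" X W] by simp
qed

lemma sub_eq: assumes "a \<in> hm X Y" "b \<in> hm X Y" "a \<oplus> ng b = Z X Y" shows "a = b"
proof -
  have "a = a \<oplus> Z X Y" using assms add_zero by simp
  also have "\<dots> = a \<oplus> (ng b \<oplus> b)" using assms add_neg add_comm[of b X Y "ng b"] neg_hom by simp
  also have "\<dots> = (a \<oplus> ng b) \<oplus> b" using add_assoc[OF assms(1) neg_hom[OF assms(2)] assms(2)] by simp
  also have "\<dots> = b" using assms zero_add by simp
  finally show ?thesis .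
qed

lemma neg_unique: assumes "x \<in> hm X Y" "y \<in> hm X Y" "x \<oplus> y = Z X Y" shows "y = ng x"
proof -
  have "y = y \<oplus> Z X Y" using assms add_zero by simp
  also have "\<dots> = y \<oplus> (x \<oplus> ng x)" using assms add_neg by simp
  also have "\<dots> = (y \<oplus> x) \<oplus> ng x" using assms add_assoc neg_hom by simp
  also have "\<dots> = Z X Y \<oplus> ng x" using assms add_comm by simp
  also have "\<dots> = ng x" using assms zero_add neg_hom by blast
  finally show ?thesis .
qed

lemma neg_comp_l: assumes "f \<in> hm X Y" "g \<in> hm Y W" shows "g \<cdot> ng f = ng (g \<cdot> f)"
proof -
  have nf: "ng f \<in> hm X Y" using assms(1) by (rule neg_hom)
  have "g \<cdot> f \<oplus> g \<cdot> ng f = g \<cdot> (f \<oplus> ng f)" using distl[OF assms(1) nf assms(2)] by simp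
  also have "\<dots> = Z X W" using assms add_neg comp_zero_r hom_obj by simp
  finally have "g \<cdot> f \<oplus> g \<cdot> ng f = Z X W" .
  then show ?thesis using neg_unique[OF comp_hom[OF assms(1) assms(2)] comp_hom[OF nf assms(2)]] by simp
qed

lemma comp_sub_zero: assumes "a \<in> hm X Y" "b \<in> hm X Y" "g \<in> hm Y W" "g \<cdot> a = g \<cdot> b"
  shows "g \<cdot> (a \<oplus> ng b) = Z X W"
proof -
  have nb: "ng b \<in> hm X Y" using assms(2) by (rule neg_hom)
  have "g \<cdot> (a \<oplus> ng b) = g \<cdot> a \<oplus> g \<cdot> ng b" using distl[OF assms(1) nb assms(3)] by simp
  also have "\<dots> = g \<cdot> b \<oplus> ng (g \<cdot> b)" using assms neg_comp_l by simp
  also have "\<dots> = Z X W" using add_neg[OF comp_hom[OF assms(2,3)]] by simp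
  finally show ?thesis .
qed

lemma sub_comp_zero: assumes "a \<in> hm X Y" "b \<in> hm X Y" "h \<in> hm V X" "(a \<oplus> ng b) \<cdot> h = Z V Y"
  shows "a \<cdot> h = b \<cdot> h"
proof -
  have nb: "ng b \<in> hm X Y" using assms(2) by (rule neg_hom)
  have "(a \<oplus> ng b) \<cdot> h = a \<cdot> h \<oplus> (ng b) \<cdot> h" using distr[OF assms(3) assms(1) nb] by simp
  moreover have "b \<cdot> h \<oplus> (ng b) \<cdot> h = (b \<oplus> ng b) \<cdot> h" using distr[OF assms(3) assms(2) nb] by simp
  moreover have "(b \<oplus> ng b) \<cdot> h = Z V Y" using assms add_neg comp_zero_l hom_obj by simp
  ultimately have "b \<cdot> h \<oplus> (ng b) \<cdot> h = Z V Y" by simp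
  moreover have "(a \<oplus> ng b) \<cdot> h = a \<cdot> h \<oplus> (ng b) \<cdot> h" using distr[OF assms(3) assms(1) nb] by simp
  ultimately have "a \<cdot> h \<oplus> (ng b) \<cdot> h = b \<cdot> h \<oplus> (ng b) \<cdot> h" using assms by simp
  then have "a \<cdot> h \<oplus> (ng b) \<cdot> h \<oplus> ng (ng b \<cdot> h) = b \<cdot> h \<oplus> (ng b) \<cdot> h \<oplus> ng (ng b \<cdot> h)" by simp
  moreover have ah: "a \<cdot> h \<in> hm V Y" "b \<cdot> h \<in> hm V Y" "ng b \<cdot> h \<in> hm V Y" "ng (ng b \<cdot> h) \<in> hm V Y"
    using assms nb by (auto intro!: neg_hom comp_hom)
  ultimately have "a \<cdot> h \<oplus> ((ng b) \<cdot> h \<oplus> ng (ng b \<cdot> h)) = b \<cdot> h \<oplus> ((ng b) \<cdot> h \<oplus> ng (ng b \<cdot> h))"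
    using add_assoc by simp
  then show ?thesis using ah add_neg add_zero by simp
qed


lemma iso_D: assumes "is_iso E f" obtains X Y g where "f \<in> hm X Y" "g \<in> hm Y X" "g \<cdot> f = Id E X" "f \<cdot> g = Id E Y"
proof -
  obtain g where "g \<in> hm (Cod E f) (Dom E f)" "g \<cdot> f = Id E (Dom E f)" "f \<cdot> g = Id E (Cod E f)" "f \<in> Arr E"
    using assms unfolding is_iso_def by blast
  then show ?thesis using that[of "Dom E f" "Cod E f" g] arr_hom by blast
qed

lemma iso_I: "f \<in> hm X Y \<Longrightarrow> g \<in> hm Y X \<Longrightarrow> g \<cdot> f = Id E X \<Longrightarrow> f \<cdot> g = Id E Y \<Longrightarrow> is_iso E f"
  unfolding is_iso_def hom_def by auto

lemma iso_inv: "f \<in> hm X Y \<Longrightarrow> g \<in> hm Y X \<Longrightarrow> g \<cdot> f = Id E X \<Longrightarrow> f \<cdot> g = Id E Y \<Longrightarrow> is_iso E g"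
  using iso_I by blast

lemma iso_id: assumes "X \<in> Obj E" shows "is_iso E (Id E X)"
  using iso_I[of "Id E X" X X "Id E X"] id_hom[OF assms] id_l[OF id_hom[OF assms]] by simp

lemma iso_comp: assumes "is_iso E f" "is_iso E g" "f \<in> hm X Y" "g \<in> hm Y W" shows "is_iso E (g \<cdot> f)"
proof -
  obtain f' where f': "f' \<in> hm Y X" "f' \<cdot> f = Id E X" "f \<cdot> f' = Id E Y"
    using assms(1,3) unfolding is_iso_def hom_def by auto
  obtain g' where g': "g' \<in> hm W Y" "g' \<cdot> g = Id E Y" "g \<cdot> g' = Id E W"
    using assms(2,4) unfolding is_iso_def hom_def by auto
  have "(f' \<cdot> g') \<cdot> (g \<cdot> f) = f' \<cdot> (g' \<cdot> (g \<cdot> f))" using assoc[OF comp_hom[OF assms(3,4)] g'(1) f'(1)] by simp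
  also have "\<dots> = f' \<cdot> f" using assoc[OF assms(3,4) g'(1)] g' assms(3) by simp
  finally have 1: "(f' \<cdot> g') \<cdot> (g \<cdot> f) = Id E X" using f' by simp
  have "(g \<cdot> f) \<cdot> (f' \<cdot> g') = g \<cdot> (f \<cdot> (f' \<cdot> g'))" using assoc[OF comp_hom[OF g'(1) f'(1)] assms(3,4)] by simp
  also have "\<dots> = g \<cdot> g'" using assoc[OF g'(1) f'(1) assms(3)] f' g'(1) by simp
  finally have 2: "(g \<cdot> f) \<cdot> (f' \<cdot> g') = Id E W" using g' by simp
  show ?thesis using iso_I[OF comp_hom[OF assms(3,4)] comp_hom[OF g'(1) f'(1)] 1 2] .
qed

lemma mono_canc: "is_mono E m \<Longrightarrow> m \<in> hm X Y \<Longrightarrow> g \<in> hm T X \<Longrightarrow> h \<in> hm T X \<Longrightarrow> m \<cdot> g = m \<cdot> h \<Longrightarrow> g = h"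
  unfolding is_mono_def hom_def by auto

lemma confD: assumes "(i, p) \<in> Conf"
  shows "i \<in> hm (Dom E i) (Cod E i)" "p \<in> hm (Cod E i) (Cod E p)" "p \<cdot> i = Z (Dom E i) (Cod E p)"
proof -
  have "kernel_cokernel_pair E i p" using assms CC unfolding conflation_category_def by blast
  then show "i \<in> hm (Dom E i) (Cod E i)" "p \<in> hm (Cod E i) (Cod E p)" "p \<cdot> i = Z (Dom E i) (Cod E p)"
    unfolding kernel_cokernel_pair_def is_kernel_def hom_def by auto
qed

lemma conf_hom: assumes "(i, p) \<in> Conf" "i \<in> hm K X" shows "p \<in> hm X (Cod E p)" "p \<cdot> i = Z K (Cod E p)"
  using confD[OF assms(1)] assms(2) unfolding hom_def by auto

lemma conf_hom2: assumes "(i, p) \<in> Conf" "p \<in> hm X Q" shows "i \<in> hm (Dom E i) X" "p \<cdot> i = Z (Dom E i) Q"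
  using confD[OF assms(1)] assms(2) unfolding hom_def by auto

lemma conf_kcp: "(i, p) \<in> Conf \<Longrightarrow> kernel_cokernel_pair E i p"
  using CC unfolding conflation_category_def by blast

lemma ker_univ: assumes "(i, p) \<in> Conf" "g \<in> Arr E" "Cod E g = Dom E p" "p \<cdot> g = Z (Dom E g) (Cod E p)"
  shows "\<exists>!h. h \<in> hom E (Dom E g) (Dom E i) \<and> i \<cdot> h = g"
proof -
  have "is_kernel E i p" using conf_kcp[OF assms(1)] unfolding kernel_cokernel_pair_def by simp
  then have "\<forall>g\<in>Arr E. Cod E g = Dom E p \<longrightarrow> p \<cdot> g = Z (Dom E g) (Cod E p) \<longrightarrow>
        (\<exists>!h. h \<in> hom E (Dom E g) (Dom E i) \<and> i \<cdot> h = g)" unfolding is_kernel_def by blast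
  then show ?thesis using assms(2-4) by blast
qed

lemma cok_univ: assumes "(i, p) \<in> Conf" "g \<in> Arr E" "Dom E g = Cod E i" "g \<cdot> i = Z (Dom E i) (Cod E g)"
  shows "\<exists>!h. h \<in> hom E (Cod E p) (Cod E g) \<and> h \<cdot> p = g"
proof -
  have "is_cokernel E p i" using conf_kcp[OF assms(1)] unfolding kernel_cokernel_pair_def by simp
  then have "\<forall>g\<in>Arr E. Dom E g = Cod E i \<longrightarrow> g \<cdot> i = Z (Dom E i) (Cod E g) \<longrightarrow>
        (\<exists>!h. h \<in> hom E (Cod E p) (Cod E g) \<and> h \<cdot> p = g)" unfolding is_cokernel_def by blast
  then show ?thesis using assms(2-4) by blast
qed

lemma ker_lift: assumes "(i, p) \<in> Conf" "i \<in> hm K X" "p \<in> hm X Q" "g \<in> hm T X" "p \<cdot> g = Z T Q"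
  shows "\<exists>h \<in> hm T K. i \<cdot> h = g"
proof -
  have "\<exists>!h. h \<in> hom E (Dom E g) (Dom E i) \<and> i \<cdot> h = g"
    by (rule ker_univ[OF assms(1)]) (use assms(2-5) in \<open>auto simp: hom_def\<close>)
  then show ?thesis using assms(2,4) unfolding hom_def by auto
qed

lemma ex1_eq: "\<exists>!x. P x \<Longrightarrow> P a \<Longrightarrow> P b \<Longrightarrow> a = b" by blast

lemma ker_mono: assumes "(i, p) \<in> Conf" "i \<in> hm K X" "g \<in> hm T K" "h \<in> hm T K" "i \<cdot> g = i \<cdot> h"
  shows "g = h"
proof -
  obtain Q where p: "p \<in> hm X Q" using conf_hom[OF assms(1,2)] by blast
  have "p \<cdot> i = Z K Q" using conf_hom[OF assms(1,2)] p unfolding hom_def by auto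
  then have pz: "p \<cdot> (i \<cdot> g) = Z T Q" using assoc[OF assms(3,2) p] comp_zero_l[OF assms(3)] hom_obj[OF p] by simp
  have ig: "i \<cdot> g \<in> hm T X" using comp_hom[OF assms(3,2)] .
  have "\<exists>!h. h \<in> hom E (Dom E (i \<cdot> g)) (Dom E i) \<and> i \<cdot> h = i \<cdot> g"
    by (rule ker_univ[OF assms(1)]) (use ig p pz in \<open>auto simp: hom_def\<close>)
  moreover have "Dom E (i \<cdot> g) = T" "Dom E i = K" using ig assms(2) unfolding hom_def by auto
  ultimately have u: "\<exists>!h. h \<in> hm T K \<and> i \<cdot> h = i \<cdot> g" by simp
  show ?thesis by (rule ex1_eq[OF u]) (use assms(3,4,5) in auto)
qed

lemma cok_desc: assumes "(i, p) \<in> Conf" "i \<in> hm K X" "p \<in> hm X Q" "g \<in> hm X T" "g \<cdot> i = Z K T"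
  shows "\<exists>h \<in> hm Q T. h \<cdot> p = g"
proof -
  have "\<exists>!h. h \<in> hom E (Cod E p) (Cod E g) \<and> h \<cdot> p = g"
    by (rule cok_univ[OF assms(1)]) (use assms(2-5) in \<open>auto simp: hom_def\<close>)
  then show ?thesis using assms(3,4) unfolding hom_def by auto
qed

lemma cok_epi: assumes "(i, p) \<in> Conf" "p \<in> hm X Q" "g \<in> hm Q T" "h \<in> hm Q T" "g \<cdot> p = h \<cdot> p"
  shows "g = h"
proof -
  obtain K where i: "i \<in> hm K X" using conf_hom2[OF assms(1,2)] by blast
  have "p \<cdot> i = Z K Q" using conf_hom2[OF assms(1,2)] i unfolding hom_def by auto
  then have pz: "(g \<cdot> p) \<cdot> i = Z K T" using assoc[OF i assms(2,3)] comp_zero_r[OF assms(3)] hom_obj[OF i] by simp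
  have gp: "g \<cdot> p \<in> hm X T" using comp_hom[OF assms(2,3)] .
  have "\<exists>!h. h \<in> hom E (Cod E p) (Cod E (g \<cdot> p)) \<and> h \<cdot> p = g \<cdot> p"
    by (rule cok_univ[OF assms(1)]) (use i gp pz in \<open>auto simp: hom_def\<close>)
  moreover have "Cod E (g \<cdot> p) = T" "Cod E p = Q" using gp assms(2) unfolding hom_def by auto
  ultimately have u: "\<exists>!h. h \<in> hm Q T \<and> h \<cdot> p = g \<cdot> p" by simp
  show ?thesis by (rule ex1_eq[OF u]) (use assms(3,4,5) in auto)
qed

lemma conf_iso: assumes "(i, p) \<in> Conf" "i \<in> hm K X" "p \<in> hm X Q"
  "a \<in> hm K K'" "b \<in> hm X X'" "c \<in> hm Q Q'" "is_iso E a" "is_iso E b" "is_iso E c"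
  "i' \<in> hm K' X'" "p' \<in> hm X' Q'" "b \<cdot> i = i' \<cdot> a" "c \<cdot> p = p' \<cdot> b"
  shows "(i', p') \<in> Conf"
proof -
  have "\<forall>(i,p)\<in>Conf. \<forall>i'\<in>Arr E. \<forall>p'\<in>Arr E. \<forall>a b c.
        Cod E i' = Dom E p' \<longrightarrow>
        a \<in> hom E (Dom E i) (Dom E i') \<longrightarrow> b \<in> hom E (Cod E i) (Cod E i') \<longrightarrow>
        c \<in> hom E (Cod E p) (Cod E p') \<longrightarrow>
        is_iso E a \<longrightarrow> is_iso E b \<longrightarrow> is_iso E c \<longrightarrow>
        b \<cdot> i = i' \<cdot> a \<longrightarrow> c \<cdot> p = p' \<cdot> b \<longrightarrow> (i', p') \<in> Conf"
    using CC unfolding conflation_category_def by blast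
  then have "\<forall>i'\<in>Arr E. \<forall>p'\<in>Arr E. \<forall>a b c.
        Cod E i' = Dom E p' \<longrightarrow>
        a \<in> hom E (Dom E i) (Dom E i') \<longrightarrow> b \<in> hom E (Cod E i) (Cod E i') \<longrightarrow>
        c \<in> hom E (Cod E p) (Cod E p') \<longrightarrow>
        is_iso E a \<longrightarrow> is_iso E b \<longrightarrow> is_iso E c \<longrightarrow>
        b \<cdot> i = i' \<cdot> a \<longrightarrow> c \<cdot> p = p' \<cdot> b \<longrightarrow> (i', p') \<in> Conf"
    using assms(1) by blast
  moreover have "i' \<in> Arr E" "p' \<in> Arr E" "Cod E i' = Dom E p'"
    "a \<in> hom E (Dom E i) (Dom E i')" "b \<in> hom E (Cod E i) (Cod E i')" "c \<in> hom E (Cod E p) (Cod E p')"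
    using assms unfolding hom_def by auto
  ultimately show ?thesis using assms(7-9,12,13) by blast
qed

lemma defl_I: "(i, p) \<in> Conf \<Longrightarrow> deflation Conf p" unfolding deflation_def by blast
lemma infl_I: "(i, p) \<in> Conf \<Longrightarrow> inflation Conf i" unfolding inflation_def by blast

lemma P1: "(i, p) \<in> Conf \<Longrightarrow> Cod E i \<in> A \<longleftrightarrow> (Dom E i \<in> A \<and> Cod E p \<in> A)"
  using SP unfolding strongly_right_percolating_def right_percolating_def by blast

lemma A_sub: "A \<subseteq> Obj E" and A_ne: "A \<noteq> {}"
  using SP unfolding strongly_right_percolating_def right_percolating_def by blast+

lemma sP2: assumes "f \<in> hm X Y" "Y \<in> A"
  obtains i p g A1 where "(i, p) \<in> Conf" "p \<in> hm X A1" "A1 \<in> A" "g \<in> hm A1 Y" "g \<cdot> p = f" "is_mono E g"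
proof -
  have "strong_P2 E Conf A" using SP unfolding strongly_right_percolating_def by blast
  then have "\<forall>f\<in>Arr E. Cod E f \<in> A \<longrightarrow>
        (\<exists>p g. deflation Conf p \<and> Dom E p = Dom E f \<and> Cod E p \<in> A \<and>
               g \<in> hom E (Cod E p) (Cod E f) \<and> g \<cdot> p = f \<and> is_mono E g)" unfolding strong_P2_def by blast
  moreover have fa: "f \<in> Arr E" "Cod E f \<in> A" "Dom E f = X" "Cod E f = Y" using assms unfolding hom_def by auto
  ultimately have "\<exists>p g. deflation Conf p \<and> Dom E p = Dom E f \<and> Cod E p \<in> A \<and>
               g \<in> hom E (Cod E p) (Cod E f) \<and> g \<cdot> p = f \<and> is_mono E g" by blast
  then obtain p g where "deflation Conf p" "Dom E p = X" "Cod E p \<in> A" "g \<in> hm (Cod E p) Y" "g \<cdot> p = f" "is_mono E g"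
    unfolding fa by blast
  moreover obtain i where i: "(i, p) \<in> Conf" using \<open>deflation Conf p\<close> unfolding deflation_def by blast
  moreover have "p \<in> hm X (Cod E p)" using confD(2)[OF i] \<open>Dom E p = X\<close> unfolding hom_def by simp
  ultimately show ?thesis using that[of i p "Cod E p" g] by blast
qed

lemma S_infl: "(i, p) \<in> Conf \<Longrightarrow> Cod E p \<in> A \<Longrightarrow> i \<in> S"
  by (rule S_A.inf) (auto simp: A_inflation_def)
lemma S_defl: "(i, p) \<in> Conf \<Longrightarrow> Dom E i \<in> A \<Longrightarrow> p \<in> S"
  by (rule S_A.defl) (auto simp: A_deflation_def)
lemma S_comp: "s \<in> S \<Longrightarrow> t \<in> S \<Longrightarrow> s \<in> hm X Y \<Longrightarrow> t \<in> hm Y W \<Longrightarrow> t \<cdot> s \<in> S"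
  by (rule S_A.comp) (auto simp: hom_def)
lemma S_arr: "s \<in> S \<Longrightarrow> s \<in> Arr E"
proof (induction rule: S_A.induct)
  case (inf s) then obtain p where "(s, p) \<in> Conf" unfolding A_inflation_def by blast
  then show ?case using confD(1) unfolding hom_def by blast
next
  case (defl s) then obtain i where "(i, s) \<in> Conf" unfolding A_deflation_def by blast
  then show ?case using confD(2) unfolding hom_def by blast
next
  case (comp s t)
  from comp have a: "s \<in> Arr E" "t \<in> Arr E" "Cod E s = Dom E t" by auto
  have 1: "s \<in> hm (Dom E s) (Dom E t)" using arr_hom[OF a(1)] a(3) by simp
  have "t \<cdot> s \<in> hm (Dom E s) (Cod E t)"
    using comp_hom[OF 1 arr_hom[OF a(2)]] .
  then show ?case unfolding hom_def by blast
qed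

lemma S_hom: "s \<in> S \<Longrightarrow> s \<in> hm (Dom E s) (Cod E s)"
  by (rule arr_hom[OF S_arr])


lemma arr_comp: "f \<in> Arr E \<Longrightarrow> g \<in> Arr E \<Longrightarrow> Cod E f = Dom E g \<Longrightarrow> g \<cdot> f \<in> Arr E"
  using comp_hom[of f "Dom E f" "Cod E f" g "Cod E g"] unfolding hom_def by auto
lemma dom_comp: "f \<in> Arr E \<Longrightarrow> g \<in> Arr E \<Longrightarrow> Cod E f = Dom E g \<Longrightarrow> Dom E (g \<cdot> f) = Dom E f"
  using comp_hom[of f "Dom E f" "Cod E f" g "Cod E g"] unfolding hom_def by auto
lemma cod_comp: "f \<in> Arr E \<Longrightarrow> g \<in> Arr E \<Longrightarrow> Cod E f = Dom E g \<Longrightarrow> Cod E (g \<cdot> f) = Cod E g"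
  using comp_hom[of f "Dom E f" "Cod E f" g "Cod E g"] unfolding hom_def by auto
lemma assoc': "f \<in> Arr E \<Longrightarrow> g \<in> Arr E \<Longrightarrow> h \<in> Arr E \<Longrightarrow> Cod E f = Dom E g \<Longrightarrow> Cod E g = Dom E h \<Longrightarrow>
   (h \<cdot> g) \<cdot> f = h \<cdot> (g \<cdot> f)"
  using assoc[of f "Dom E f" "Cod E f" g "Cod E g" h "Cod E h"] unfolding hom_def by auto
lemma idl': "f \<in> Arr E \<Longrightarrow> Cod E f = Y \<Longrightarrow> Id E Y \<cdot> f = f"
  using id_l[of f "Dom E f" "Cod E f"] unfolding hom_def by auto
lemma idr': "f \<in> Arr E \<Longrightarrow> Dom E f = X \<Longrightarrow> f \<cdot> Id E X = f"
  using id_r[of f "Dom E f" "Cod E f"] unfolding hom_def by auto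
lemma id_arr: "X \<in> Obj E \<Longrightarrow> Id E X \<in> Arr E" using id_hom unfolding hom_def by blast
lemma id_dom: "X \<in> Obj E \<Longrightarrow> Dom E (Id E X) = X" using id_hom unfolding hom_def by blast
lemma id_cod: "X \<in> Obj E \<Longrightarrow> Cod E (Id E X) = X" using id_hom unfolding hom_def by blast
lemma zl': "f \<in> Arr E \<Longrightarrow> Dom E f = X \<Longrightarrow> Cod E f = Y \<Longrightarrow> W \<in> Obj E \<Longrightarrow> Z Y W \<cdot> f = Z X W"
  using comp_zero_l[of f X Y W] unfolding hom_def by auto
lemma zr': "g \<in> Arr E \<Longrightarrow> Dom E g = Y \<Longrightarrow> Cod E g = W \<Longrightarrow> X \<in> Obj E \<Longrightarrow> g \<cdot> Z X Y = Z X W"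
  using comp_zero_r[of g Y W X] unfolding hom_def by auto
lemma z_arr: "X \<in> Obj E \<Longrightarrow> Y \<in> Obj E \<Longrightarrow> Z X Y \<in> Arr E" using zero_hom unfolding hom_def by blast
lemma z_dom: "X \<in> Obj E \<Longrightarrow> Y \<in> Obj E \<Longrightarrow> Dom E (Z X Y) = X" using zero_hom unfolding hom_def by blast
lemma z_cod: "X \<in> Obj E \<Longrightarrow> Y \<in> Obj E \<Longrightarrow> Cod E (Z X Y) = Y" using zero_hom unfolding hom_def by blast
lemma dom_obj: "f \<in> Arr E \<Longrightarrow> Dom E f \<in> Obj E" using CAT unfolding is_category_def by blast
lemma cod_obj: "f \<in> Arr E \<Longrightarrow> Cod E f \<in> Obj E" using CAT unfolding is_category_def by blast

lemmas cs = arr_comp dom_comp cod_comp assoc' idl' idr' id_arr id_dom id_cod zl' zr' z_arr z_dom z_cod hom_def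


lemma tail: assumes "g \<cdot> f = h" "f \<in> Arr E" "g \<in> Arr E" "Cod E f = Dom E g" "x \<in> Arr E" "Cod E x = Dom E f"
  shows "g \<cdot> (f \<cdot> x) = h \<cdot> x"
  using assoc'[OF assms(5,2,3,6,4)] assms(1) by simp

lemma pb_facts: assumes "is_pullback E f g p q"
  shows "f \<in> Arr E" "g \<in> Arr E" "p \<in> Arr E" "q \<in> Arr E" "Cod E f = Cod E g" "Dom E p = Dom E q"
    "Cod E p = Dom E f" "Cod E q = Dom E g" "f \<cdot> p = g \<cdot> q"
  using assms unfolding is_pullback_def by auto

lemma pb_univ: assumes "is_pullback E f g p q" "p' \<in> Arr E" "q' \<in> Arr E" "Dom E p' = Dom E q'"
  "Cod E p' = Dom E f" "Cod E q' = Dom E g" "f \<cdot> p' = g \<cdot> q'"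
  shows "\<exists>!h. h \<in> hom E (Dom E p') (Dom E p) \<and> p \<cdot> h = p' \<and> q \<cdot> h = q'"
proof -
  have "\<forall>p'\<in>Arr E. \<forall>q'\<in>Arr E. Dom E p' = Dom E q' \<longrightarrow> Cod E p' = Dom E f \<longrightarrow> Cod E q' = Dom E g \<longrightarrow>
        f \<cdot> p' = g \<cdot> q' \<longrightarrow>
        (\<exists>!h. h \<in> hom E (Dom E p') (Dom E p) \<and> p \<cdot> h = p' \<and> q \<cdot> h = q')"
    using assms(1) unfolding is_pullback_def by blast
  then show ?thesis using assms(2-7) by blast
qed

lemma pushout_facts: assumes "is_pushout E f g p q"
  shows "f \<in> Arr E" "g \<in> Arr E" "p \<in> Arr E" "q \<in> Arr E" "Dom E f = Dom E g" "Cod E p = Cod E q"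
    "Cod E f = Dom E p" "Cod E g = Dom E q" "p \<cdot> f = q \<cdot> g"
  using assms unfolding is_pushout_def by auto

lemma po_univ: assumes "is_pushout E f g p q" "p' \<in> Arr E" "q' \<in> Arr E" "Cod E p' = Cod E q'"
  "Dom E p' = Cod E f" "Dom E q' = Cod E g" "p' \<cdot> f = q' \<cdot> g"
  shows "\<exists>!h. h \<in> hom E (Cod E p) (Cod E p') \<and> h \<cdot> p = p' \<and> h \<cdot> q = q'"
proof -
  have "\<forall>p'\<in>Arr E. \<forall>q'\<in>Arr E. Cod E p' = Cod E q' \<longrightarrow> Dom E p' = Cod E f \<longrightarrow> Dom E q' = Cod E g \<longrightarrow>
        p' \<cdot> f = q' \<cdot> g \<longrightarrow>
        (\<exists>!h. h \<in> hom E (Cod E p) (Cod E p') \<and> h \<cdot> p = p' \<and> h \<cdot> q = q')"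
    using assms(1) unfolding is_pushout_def by blast
  then show ?thesis using assms(2-7) by blast
qed

lemma R0: "zero_object E z \<Longrightarrow> \<exists>i. (i, Id E z) \<in> Conf"
  using RE unfolding right_exact_def deflation_def by blast

lemma R2: assumes "(i, p) \<in> Conf" "f \<in> Arr E" "Cod E f = Cod E p"
  shows "\<exists>f' p' i'. is_pullback E p f f' p' \<and> (i', p') \<in> Conf"
proof -
  have "\<forall>p f. deflation Conf p \<longrightarrow> f \<in> Arr E \<longrightarrow> Cod E f = Cod E p \<longrightarrow>
        (\<exists>f' p'. is_pullback E p f f' p' \<and> deflation Conf p')"
    using RE unfolding right_exact_def by blast
  then have "\<exists>f' p'. is_pullback E p f f' p' \<and> deflation Conf p'" using assms defl_I by blast
  then show ?thesis unfolding deflation_def by blast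
qed

lemma zobj_ex: "\<exists>z. zero_object E z" using ADD unfolding is_additive_def by blast

lemma zobj_into: assumes "zero_object E z" "g \<in> hm T z" shows "g = Z T z"
proof -
  have T: "T \<in> Obj E" "z \<in> Obj E" using hom_obj[OF assms(2)] by auto
  then have "\<exists>!f. f \<in> hm T z" using assms(1) unfolding zero_object_def by blast
  moreover have "Z T z \<in> hm T z" using zero_hom T by blast
  ultimately show ?thesis using assms(2) by blast
qed

lemma zobj_from: assumes "zero_object E z" "g \<in> hm z T" shows "g = Z z T"
proof -
  have T: "T \<in> Obj E" "z \<in> Obj E" using hom_obj[OF assms(2)] by auto
  then have "\<exists>!f. f \<in> hm z T" using assms(1) unfolding zero_object_def by blast
  moreover have "Z z T \<in> hm z T" using zero_hom T by blast
  ultimately show ?thesis using assms(2) by blast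
qed

lemma iso_defl: assumes "is_iso E \<phi>" "\<phi> \<in> hm X Y" shows "\<exists>i. (i, \<phi>) \<in> Conf"
proof -
  obtain z where z: "zero_object E z" using zobj_ex by blast
  have zO: "z \<in> Obj E" using z unfolding zero_object_def by blast
  have XY: "X \<in> Obj E" "Y \<in> Obj E" using hom_obj[OF assms(2)] by auto
  obtain i0 where i0: "(i0, Id E z) \<in> Conf" using R0[OF z] by blast
  have f: "Z Y z \<in> hm Y z" using zero_hom XY zO by blast
  obtain f' p' i' where pb: "is_pullback E (Id E z) (Z Y z) f' p'" and ip: "(i', p') \<in> Conf"
    using R2[OF i0, of "Z Y z"] f zO unfolding hom_def by (auto simp: id_cod)
  note pf = pb_facts[OF pb]
  define P where "P = Dom E p'"
  have p'h: "p' \<in> hm P Y" using pf zO XY unfolding P_def hom_def by (simp add: z_dom)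
  have f'h: "f' \<in> hm P z" using pf zO XY unfolding P_def hom_def by (simp add: id_dom)
  have "\<exists>!h. h \<in> hom E (Dom E (Z Y z)) (Dom E f') \<and> f' \<cdot> h = Z Y z \<and> p' \<cdot> h = Id E Y"
    by (rule pb_univ[OF pb]) (use zO XY in \<open>simp_all add: cs\<close>)
  then obtain \<sigma> where \<sigma>: "\<sigma> \<in> hm Y P" "f' \<cdot> \<sigma> = Z Y z" "p' \<cdot> \<sigma> = Id E Y"
    using XY zO pf unfolding P_def by (auto simp: z_dom)
  have u: "\<exists>!h. h \<in> hom E (Dom E f') (Dom E f') \<and> f' \<cdot> h = f' \<and> p' \<cdot> h = p'"
    by (rule pb_univ[OF pb]) (use pf in \<open>simp_all\<close>)
  have PO: "P \<in> Obj E" using hom_obj[OF p'h] by blast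
  have "\<sigma> \<cdot> p' = Id E P"
  proof (rule ex1_eq[OF u])
    show "\<sigma> \<cdot> p' \<in> hom E (Dom E f') (Dom E f') \<and> f' \<cdot> (\<sigma> \<cdot> p') = f' \<and> p' \<cdot> (\<sigma> \<cdot> p') = p'"
    proof (intro conjI)
      show "\<sigma> \<cdot> p' \<in> hom E (Dom E f') (Dom E f')" using comp_hom[OF p'h \<sigma>(1)] f'h unfolding hom_def by simp
      have "f' \<cdot> (\<sigma> \<cdot> p') = Z P z" using tail[OF \<sigma>(2), of p'] p'h f'h \<sigma>(1) XY zO unfolding hom_def by (simp add: zl')
      then show "f' \<cdot> (\<sigma> \<cdot> p') = f'" using zobj_into[OF z f'h] by simp
      show "p' \<cdot> (\<sigma> \<cdot> p') = p'" using tail[OF \<sigma>(3), of p'] p'h \<sigma>(1) unfolding hom_def by (simp add: idl')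
    qed
    show "Id E P \<in> hom E (Dom E f') (Dom E f') \<and> f' \<cdot> Id E P = f' \<and> p' \<cdot> Id E P = p'"
      using PO f'h p'h id_hom[OF PO] unfolding hom_def by (simp add: idr')
  qed
  then have isop: "is_iso E p'" using iso_I[OF p'h \<sigma>(1)] \<sigma>(3) by simp
  obtain \<psi> where \<psi>: "\<psi> \<in> hm Y X" "\<psi> \<cdot> \<phi> = Id E X" "\<phi> \<cdot> \<psi> = Id E Y"
    using assms unfolding is_iso_def hom_def by auto
  have isopsi: "is_iso E \<psi>" using iso_inv[OF assms(2) \<psi>(1) \<psi>(2,3)] .
  define b where "b = \<psi> \<cdot> p'"
  have bh: "b \<in> hm P X" unfolding b_def using comp_hom[OF p'h \<psi>(1)] .
  have isob: "is_iso E b" unfolding b_def using iso_comp[OF isop isopsi p'h \<psi>(1)] .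
  define K where "K = Dom E i'"
  have i'h: "i' \<in> hm K P" using confD(1)[OF ip] confD(2)[OF ip] p'h unfolding K_def hom_def by auto
  have KO: "K \<in> Obj E" using hom_obj[OF i'h] by blast
  have "(b \<cdot> i', \<phi>) \<in> Conf"
  proof (rule conf_iso[OF ip i'h p'h id_hom[OF KO] bh id_hom[OF \<open>Y \<in> Obj E\<close>] iso_id[OF KO] isob iso_id[OF \<open>Y \<in> Obj E\<close>]])
    show "b \<cdot> i' \<in> hm K X" using comp_hom[OF i'h bh] .
    show "\<phi> \<in> hm X Y" by fact
    show "b \<cdot> i' = (b \<cdot> i') \<cdot> Id E K" using comp_hom[OF i'h bh] by simp
    show "Id E Y \<cdot> p' = \<phi> \<cdot> b" unfolding b_def using tail[OF \<psi>(3), of p'] p'h \<psi>(1) assms(2) unfolding hom_def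
      by (simp add: idl')
  qed
  then show ?thesis by blast
qed


definition zl where "zl K \<longleftrightarrow> K \<in> Obj E \<and> (\<forall>T\<in>Obj E. \<forall>g\<in>hm T K. g = Z T K) \<and> (\<forall>T\<in>Obj E. \<forall>g\<in>hm K T. g = Z K T)"

lemma zl_obj: "zl K \<Longrightarrow> K \<in> Obj E" unfolding zl_def by blast

lemma zl_into: assumes "zl K" "g \<in> hm T K" shows "g = Z T K"
proof -
  have "T \<in> Obj E" using hom_obj[OF assms(2)] by blast
  then show ?thesis using assms unfolding zl_def by blast
qed
lemma zl_from: assumes "zl K" "g \<in> hm K T" shows "g = Z K T"
proof -
  have "T \<in> Obj E" using hom_obj[OF assms(2)] by blast
  then show ?thesis using assms unfolding zl_def by blast
qed

lemma zobj_zl: assumes "zero_object E z" shows "zl z"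
proof -
  have "z \<in> Obj E" using assms unfolding zero_object_def by blast
  moreover have "\<forall>T\<in>Obj E. \<forall>g\<in>hm T z. g = Z T z" using zobj_into[OF assms] by blast
  moreover have "\<forall>T\<in>Obj E. \<forall>g\<in>hm z T. g = Z z T" using zobj_from[OF assms] by blast
  ultimately show ?thesis unfolding zl_def by blast
qed

lemma zl_of_mono: assumes "(i, p) \<in> Conf" "i \<in> hm K X" "p \<in> hm X Q"
  "\<And>T g h. g \<in> hm T X \<Longrightarrow> h \<in> hm T X \<Longrightarrow> p \<cdot> g = p \<cdot> h \<Longrightarrow> g = h"
  shows "zl K"
proof -
  have KO: "K \<in> Obj E" "X \<in> Obj E" "Q \<in> Obj E" using hom_obj assms(2,3) by blast+
  have pi: "p \<cdot> i = Z K Q" using conf_hom[OF assms(1,2)] assms(3) unfolding hom_def by auto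
  have "p \<cdot> Z K X = Z K Q" using comp_zero_r[OF assms(3) KO(1)] .
  then have i0: "i = Z K X" using assms(4)[OF assms(2) zero_hom[OF KO(1,2)]] pi by simp
  have into: "\<forall>T\<in>Obj E. \<forall>g\<in>hm T K. g = Z T K"
  proof (intro ballI)
    fix T g assume T: "T \<in> Obj E" and g: "g \<in> hm T K"
    have "i \<cdot> g = Z T X" using i0 comp_zero_l[OF g KO(2)] by simp
    also have "\<dots> = i \<cdot> Z T K" using i0 comp_zero_r[OF zero_hom[OF KO(1,2)] T] by simp
    finally show "g = Z T K" using ker_mono[OF assms(1,2) g zero_hom[OF T KO(1)]] by simp
  qed
  have idz: "Id E K = Z K K" using into KO id_hom by blast
  have fr: "\<forall>T\<in>Obj E. \<forall>g\<in>hm K T. g = Z K T"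
  proof (intro ballI)
    fix T g assume T: "T \<in> Obj E" and g: "g \<in> hm K T"
    have "g = g \<cdot> Id E K" using g by simp
    also have "\<dots> = Z K T" using idz comp_zero_r[OF g KO(1)] by simp
    finally show "g = Z K T" .
  qed
  show ?thesis unfolding zl_def using KO into fr by blast
qed

lemma zl_iso: assumes "zl K" "zl K'" shows "is_iso E (Z K K')"
proof -
  have O: "K \<in> Obj E" "K' \<in> Obj E" using assms zl_obj by auto
  have 1: "Z K' K \<cdot> Z K K' = Id E K" using zl_into[OF assms(1) id_hom[OF O(1)]] zl_into[OF assms(1)]
    comp_hom[OF zero_hom[OF O] zero_hom[OF O(2,1)]] by simp
  have 2: "Z K K' \<cdot> Z K' K = Id E K'" using zl_into[OF assms(2) id_hom[OF O(2)]] zl_into[OF assms(2)]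
    comp_hom[OF zero_hom[OF O(2,1)] zero_hom[OF O]] by simp
  show ?thesis using iso_I[OF zero_hom[OF O] zero_hom[OF O(2,1)] 1 2] .
qed

lemma iso_inv_ex: assumes "is_iso E \<phi>" "\<phi> \<in> hm X Y"
  obtains \<psi> where "\<psi> \<in> hm Y X" "\<psi> \<cdot> \<phi> = Id E X" "\<phi> \<cdot> \<psi> = Id E Y"
proof -
  have "\<exists>g\<in>hom E (Cod E \<phi>) (Dom E \<phi>). g \<cdot> \<phi> = Id E (Dom E \<phi>) \<and> \<phi> \<cdot> g = Id E (Cod E \<phi>)"
    using assms(1) unfolding is_iso_def by blast
  moreover have "Dom E \<phi> = X" "Cod E \<phi> = Y" using assms(2) unfolding hom_def by simp_all
  ultimately have "\<exists>g\<in>hm Y X. g \<cdot> \<phi> = Id E X \<and> \<phi> \<cdot> g = Id E Y" by simp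
  then show ?thesis using that by blast
qed

lemma iso_mono: assumes "is_iso E \<phi>" "\<phi> \<in> hm X Y" "g \<in> hm T X" "h \<in> hm T X" "\<phi> \<cdot> g = \<phi> \<cdot> h" shows "g = h"
proof -
  obtain \<psi> where \<psi>: "\<psi> \<in> hm Y X" "\<psi> \<cdot> \<phi> = Id E X"
    using iso_inv_ex[OF assms(1,2)] by blast
  have "\<psi> \<cdot> (\<phi> \<cdot> g) = (\<psi> \<cdot> \<phi>) \<cdot> g" using assoc[OF assms(3,2) \<psi>(1)] .
  also have "\<dots> = g" using \<psi>(2) id_l[OF assms(3)] by simp
  finally have 1: "\<psi> \<cdot> (\<phi> \<cdot> g) = g" .
  have "\<psi> \<cdot> (\<phi> \<cdot> h) = (\<psi> \<cdot> \<phi>) \<cdot> h" using assoc[OF assms(4,2) \<psi>(1)] .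
  also have "\<dots> = h" using \<psi>(2) id_l[OF assms(4)] by simp
  finally have 2: "\<psi> \<cdot> (\<phi> \<cdot> h) = h" .
  have "g = \<psi> \<cdot> (\<phi> \<cdot> h)" using 1 assms(5) by simp
  then show ?thesis using 2 by simp
qed

lemma iso_A: assumes "is_iso E \<phi>" "\<phi> \<in> hm X Y" "X \<in> A" shows "Y \<in> A"
proof -
  obtain i where i: "(i, \<phi>) \<in> Conf" using iso_defl[OF assms(1,2)] by blast
  have c: "Cod E i = Dom E \<phi>" using confD(2)[OF i] unfolding hom_def by simp
  have "Dom E \<phi> = X" "Cod E \<phi> = Y" using assms(2) unfolding hom_def by auto
  then have "Cod E i = X" using c by simp
  then have "Cod E i \<in> A" using assms(3) by simp
  then have "Cod E \<phi> \<in> A" using P1[OF i] by blast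
  then show ?thesis using \<open>Cod E \<phi> = Y\<close> by simp
qed

lemma zl_A: assumes "zl K" shows "K \<in> A"
proof -
  obtain a where a: "a \<in> A" using A_ne by blast
  have aO: "a \<in> Obj E" using a A_sub by blast
  obtain i where i: "(i, Id E a) \<in> Conf" using iso_defl[OF iso_id[OF aO] id_hom[OF aO]] by blast
  define K0 where "K0 = Dom E i"
  have ih: "i \<in> hm K0 a" using confD[OF i] id_hom[OF aO] unfolding K0_def hom_def by auto
  have "zl K0" by (rule zl_of_mono[OF i ih id_hom[OF aO]]) simp
  moreover have "K0 \<in> A" using P1[OF i] ih a unfolding hom_def by simp
  moreover have O: "K0 \<in> Obj E" "K \<in> Obj E" using zl_obj \<open>zl K0\<close> assms by auto
  ultimately show ?thesis using iso_A[OF zl_iso[OF \<open>zl K0\<close> assms] zero_hom[OF O]] by simp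
qed

lemma iso_S: assumes "is_iso E \<phi>" "\<phi> \<in> hm X Y" shows "\<phi> \<in> S"
proof -
  obtain i where i: "(i, \<phi>) \<in> Conf" using iso_defl[OF assms] by blast
  define K0 where "K0 = Dom E i"
  have ih: "i \<in> hm K0 X" using confD[OF i] assms(2) unfolding K0_def hom_def by auto
  have "zl K0"
  proof (rule zl_of_mono[OF i ih assms(2)])
    fix T g h assume "g \<in> hm T X" "h \<in> hm T X" "\<phi> \<cdot> g = \<phi> \<cdot> h"
    then show "g = h" using iso_mono[OF assms] by blast
  qed
  then have "Dom E i \<in> A" using zl_A unfolding K0_def by blast
  then show ?thesis using S_defl[OF i] by blast
qed

lemma id_S: "X \<in> Obj E \<Longrightarrow> Id E X \<in> S"
  using iso_S[OF iso_id id_hom] by blast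

lemma zl_ex: obtains z where "zl z" "z \<in> A"
proof -
  obtain z where "zero_object E z" using zobj_ex by blast
  then have "zl z" by (rule zobj_zl)
  then show ?thesis using that zl_A by blast
qed


lemma defl_pb: assumes "(k, s) \<in> Conf" "Dom E k \<in> A" "s \<in> hm V Y" "g \<in> hm X Y"
  obtains P s' g' where "s' \<in> S" "s' \<in> hm P X" "g' \<in> hm P V" "s \<cdot> g' = g \<cdot> s'"
   "\<And>T r h. r \<in> hm T V \<Longrightarrow> h \<in> hm T X \<Longrightarrow> s \<cdot> r = g \<cdot> h \<Longrightarrow> \<exists>c\<in>hm T P. g' \<cdot> c = r \<and> s' \<cdot> c = h"
proof -
  have cg: "Cod E g = Cod E s" "g \<in> Arr E" using assms(3,4) unfolding hom_def by auto
  obtain f' p' i' where pb: "is_pullback E s g f' p'" and ip: "(i', p') \<in> Conf"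
    using R2[OF assms(1) cg(2) cg(1)] by blast
  note pf = pb_facts[OF pb]
  define P where "P = Dom E p'"
  have f'h: "f' \<in> hm P V" using pf assms(3) unfolding P_def hom_def by simp
  have p'h: "p' \<in> hm P X" using pf assms(4) unfolding P_def hom_def by simp
  have sq: "s \<cdot> f' = g \<cdot> p'" using pf by simp
  have univ: "\<And>T r h. r \<in> hm T V \<Longrightarrow> h \<in> hm T X \<Longrightarrow> s \<cdot> r = g \<cdot> h \<Longrightarrow> \<exists>c\<in>hm T P. f' \<cdot> c = r \<and> p' \<cdot> c = h"
  proof -
    fix T r h assume r: "r \<in> hm T V" and h: "h \<in> hm T X" and e: "s \<cdot> r = g \<cdot> h"
    have "\<exists>!c. c \<in> hom E (Dom E r) (Dom E f') \<and> f' \<cdot> c = r \<and> p' \<cdot> c = h"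
      by (rule pb_univ[OF pb]) (use r h e assms(3,4) in \<open>auto simp: hom_def\<close>)
    then show "\<exists>c\<in>hm T P. f' \<cdot> c = r \<and> p' \<cdot> c = h" using r f'h unfolding hom_def by auto
  qed
  define K where "K = Dom E k"
  have kh: "k \<in> hm K V" using confD[OF assms(1)] assms(3) unfolding K_def hom_def by auto
  define K' where "K' = Dom E i'"
  have i'h: "i' \<in> hm K' P" using confD[OF ip] unfolding K'_def P_def hom_def by auto
  have O: "K \<in> Obj E" "K' \<in> Obj E" "X \<in> Obj E" "Y \<in> Obj E" "V \<in> Obj E" "P \<in> Obj E"
    using hom_obj kh i'h assms(3,4) by blast+
  have sk: "s \<cdot> k = Z K Y" using conf_hom[OF assms(1) kh] assms(3) unfolding hom_def by auto
  have pi: "p' \<cdot> i' = Z K' X" using conf_hom[OF ip i'h] p'h unfolding hom_def by auto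
  have "s \<cdot> (f' \<cdot> i') = (s \<cdot> f') \<cdot> i'" using assoc[OF i'h f'h assms(3)] .
  also have "\<dots> = g \<cdot> (p' \<cdot> i')" using sq assoc[OF i'h p'h assms(4)] by simp
  also have "\<dots> = Z K' Y" using pi comp_zero_r[OF assms(4) O(2)] by simp
  finally have "s \<cdot> (f' \<cdot> i') = Z K' Y" .
  then obtain \<alpha> where \<alpha>: "\<alpha> \<in> hm K' K" "k \<cdot> \<alpha> = f' \<cdot> i'"
    using ker_lift[OF assms(1) kh assms(3) comp_hom[OF i'h f'h]] by blast
  have "g \<cdot> Z K X = Z K Y" using comp_zero_r[OF assms(4) O(1)] .
  then have "s \<cdot> k = g \<cdot> Z K X" using sk by simp
  then obtain \<beta> where \<beta>: "\<beta> \<in> hm K P" "f' \<cdot> \<beta> = k" "p' \<cdot> \<beta> = Z K X"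
    using univ[OF kh zero_hom[OF O(1,3)]] by blast
  obtain \<gamma> where \<gamma>: "\<gamma> \<in> hm K K'" "i' \<cdot> \<gamma> = \<beta>"
    using ker_lift[OF ip i'h p'h \<beta>(1) \<beta>(3)] by blast
  have "k \<cdot> (\<alpha> \<cdot> \<gamma>) = (k \<cdot> \<alpha>) \<cdot> \<gamma>" using assoc[OF \<gamma>(1) \<alpha>(1) kh] .
  also have "\<dots> = f' \<cdot> (i' \<cdot> \<gamma>)" using \<alpha>(2) assoc[OF \<gamma>(1) i'h f'h] by simp
  also have "\<dots> = k \<cdot> Id E K" using \<gamma>(2) \<beta>(2) kh by simp
  finally have ag: "\<alpha> \<cdot> \<gamma> = Id E K"
    using ker_mono[OF assms(1) kh comp_hom[OF \<gamma>(1) \<alpha>(1)] id_hom[OF O(1)]] by simp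
  have u: "\<exists>!c. c \<in> hom E (Dom E (f' \<cdot> i')) (Dom E f') \<and> f' \<cdot> c = f' \<cdot> i' \<and> p' \<cdot> c = p' \<cdot> i'"
    by (rule pb_univ[OF pb]) (use comp_hom[OF i'h f'h] comp_hom[OF i'h p'h] pf sq assoc[OF i'h f'h assms(3)]
       assoc[OF i'h p'h assms(4)] assms(3,4) in \<open>auto simp: hom_def\<close>)
  have ga: "\<gamma> \<cdot> \<alpha> \<in> hm K' K'" using comp_hom[OF \<alpha>(1) \<gamma>(1)] .
  have "i' \<cdot> (\<gamma> \<cdot> \<alpha>) = i'"
  proof (rule ex1_eq[OF u])
    have c1: "i' \<cdot> (\<gamma> \<cdot> \<alpha>) = \<beta> \<cdot> \<alpha>" using assoc[OF \<alpha>(1) \<gamma>(1) i'h] \<gamma>(2) by simp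
    have "f' \<cdot> (i' \<cdot> (\<gamma> \<cdot> \<alpha>)) = f' \<cdot> i'" using c1 assoc[OF \<alpha>(1) \<beta>(1) f'h] \<beta>(2) \<alpha>(2) by simp
    moreover have "p' \<cdot> (i' \<cdot> (\<gamma> \<cdot> \<alpha>)) = p' \<cdot> i'" using c1 assoc[OF \<alpha>(1) \<beta>(1) p'h] \<beta>(3) pi
      comp_zero_l[OF \<alpha>(1) O(3)] by simp
    moreover have "i' \<cdot> (\<gamma> \<cdot> \<alpha>) \<in> hom E (Dom E (f' \<cdot> i')) (Dom E f')"
      using comp_hom[OF ga i'h] comp_hom[OF i'h f'h] f'h unfolding hom_def by auto
    ultimately show "i' \<cdot> (\<gamma> \<cdot> \<alpha>) \<in> hom E (Dom E (f' \<cdot> i')) (Dom E f') \<and> f' \<cdot> (i' \<cdot> (\<gamma> \<cdot> \<alpha>)) = f' \<cdot> i' \<and> p' \<cdot> (i' \<cdot> (\<gamma> \<cdot> \<alpha>)) = p' \<cdot> i'"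
      by blast
    show "i' \<in> hom E (Dom E (f' \<cdot> i')) (Dom E f') \<and> f' \<cdot> i' = f' \<cdot> i' \<and> p' \<cdot> i' = p' \<cdot> i'"
      using i'h comp_hom[OF i'h f'h] f'h unfolding hom_def by auto
  qed
  then have "\<gamma> \<cdot> \<alpha> = Id E K'" using ker_mono[OF ip i'h ga id_hom[OF O(2)]] i'h by simp
  then have "is_iso E \<gamma>" using iso_I[OF \<gamma>(1) \<alpha>(1) ag] by simp
  then have "K' \<in> A" using iso_A[OF _ \<gamma>(1)] assms(2) unfolding K_def by blast
  then have "p' \<in> S" using S_defl[OF ip] unfolding K'_def by blast
  then show ?thesis using that[OF _ p'h f'h sq univ] by blast
qed


lemma ore_aux: assumes "s \<in> S"
  shows "\<forall>X g. g \<in> hm X (Cod E s) \<longrightarrow> (\<exists>W v h. v \<in> S \<and> v \<in> hm W X \<and> h \<in> hm W (Dom E s) \<and> s \<cdot> h = g \<cdot> v)"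
  using assms
proof (induction rule: S_A.induct)
  case (inf s)
  then obtain q where sq: "(s, q) \<in> Conf" "Cod E q \<in> A" unfolding A_inflation_def by blast
  show ?case
  proof (intro allI impI)
    fix X g assume g: "g \<in> hm X (Cod E s)"
    define Y where "Y = Cod E s"
    define K where "K = Dom E s"
    define A0 where "A0 = Cod E q"
    have sh: "s \<in> hm K Y" using confD(1)[OF sq(1)] unfolding K_def Y_def .
    have qh: "q \<in> hm Y A0" using confD(2)[OF sq(1)] unfolding Y_def A0_def .
    have gh: "g \<in> hm X Y" using g unfolding Y_def .
    have A0A: "A0 \<in> A" using sq(2) unfolding A0_def .
    obtain i d m A1 where id: "(i, d) \<in> Conf" "d \<in> hm X A1" "A1 \<in> A" "m \<in> hm A1 A0" "m \<cdot> d = q \<cdot> g" "is_mono E m"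
      by (rule sP2[OF comp_hom[OF gh qh] A0A])
    define W where "W = Dom E i"
    have ih: "i \<in> hm W X" using confD[OF id(1)] id(2) unfolding W_def hom_def by auto
    have iS: "i \<in> S" using S_infl[OF id(1)] id(2,3) unfolding hom_def by auto
    have O: "W \<in> Obj E" "A1 \<in> Obj E" "A0 \<in> Obj E" using hom_obj ih id(2) qh by blast+
    have di: "d \<cdot> i = Z W A1" using conf_hom[OF id(1) ih] id(2) unfolding hom_def by auto
    have "q \<cdot> (g \<cdot> i) = (q \<cdot> g) \<cdot> i" using assoc[OF ih gh qh] .
    also have "\<dots> = m \<cdot> (d \<cdot> i)" using id(5) assoc[OF ih id(2) id(4)] by simp
    also have "\<dots> = Z W A0" using di comp_zero_r[OF id(4) O(1)] by simp
    finally obtain h where h: "h \<in> hm W K" "s \<cdot> h = g \<cdot> i"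
      using ker_lift[OF sq(1) sh qh comp_hom[OF ih gh]] by blast
    show "\<exists>W v h. v \<in> S \<and> v \<in> hm W X \<and> h \<in> hm W (Dom E s) \<and> s \<cdot> h = g \<cdot> v"
      using iS ih h unfolding K_def by blast
  qed
next
  case (defl s)
  then obtain k where ks: "(k, s) \<in> Conf" "Dom E k \<in> A" unfolding A_deflation_def by blast
  show ?case
  proof (intro allI impI)
    fix X g assume g: "g \<in> hm X (Cod E s)"
    have sh: "s \<in> hm (Dom E s) (Cod E s)" using confD(2)[OF ks(1)] confD(1)[OF ks(1)] unfolding hom_def by auto
    obtain P s' g' where "s' \<in> S" "s' \<in> hm P X" "g' \<in> hm P (Dom E s)" "s \<cdot> g' = g \<cdot> s'"
      "\<And>T r h. r \<in> hm T (Dom E s) \<Longrightarrow> h \<in> hm T X \<Longrightarrow> s \<cdot> r = g \<cdot> h \<Longrightarrow> \<exists>c\<in>hm T P. g' \<cdot> c = r \<and> s' \<cdot> c = h"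
      by (rule defl_pb[OF ks sh g]) blast
    then show "\<exists>W v h. v \<in> S \<and> v \<in> hm W X \<and> h \<in> hm W (Dom E s) \<and> s \<cdot> h = g \<cdot> v" by blast
  qed
next
  case (comp s t)
  have sh: "s \<in> hm (Dom E s) (Dom E t)" using S_hom[OF comp.hyps(1)] comp.hyps(3) by simp
  have th: "t \<in> hm (Dom E t) (Cod E t)" using S_hom[OF comp.hyps(2)] .
  have ts: "Dom E (t \<cdot> s) = Dom E s" "Cod E (t \<cdot> s) = Cod E t" using comp_hom[OF sh th] unfolding hom_def by auto
  show ?case
  proof (intro allI impI)
    fix X g assume g: "g \<in> hm X (Cod E (t \<cdot> s))"
    then have g': "g \<in> hm X (Cod E t)" using ts by simp
    obtain W2 v2 h2 where 2: "v2 \<in> S" "v2 \<in> hm W2 X" "h2 \<in> hm W2 (Dom E t)" "t \<cdot> h2 = g \<cdot> v2"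
      using comp.IH(2) g' by blast
    have h2': "h2 \<in> hm W2 (Cod E s)" using 2(3) comp.hyps(3) by simp
    obtain W1 v1 h1 where 1: "v1 \<in> S" "v1 \<in> hm W1 W2" "h1 \<in> hm W1 (Dom E s)" "s \<cdot> h1 = h2 \<cdot> v1"
      using comp.IH(1) h2' by blast
    have "(t \<cdot> s) \<cdot> h1 = t \<cdot> (s \<cdot> h1)" using assoc[OF 1(3) sh th] by simp
    also have "\<dots> = (t \<cdot> h2) \<cdot> v1" using 1(4) assoc[OF 1(2) 2(3) th] by simp
    also have "\<dots> = g \<cdot> (v2 \<cdot> v1)" using 2(4) assoc[OF 1(2) 2(2) g'] by simp
    finally have e: "(t \<cdot> s) \<cdot> h1 = g \<cdot> (v2 \<cdot> v1)" .
    have "v2 \<cdot> v1 \<in> S" using S_comp[OF 1(1) 2(1) 1(2) 2(2)] .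
    moreover have "v2 \<cdot> v1 \<in> hm W1 X" using comp_hom[OF 1(2) 2(2)] .
    moreover have "h1 \<in> hm W1 (Dom E (t \<cdot> s))" using 1(3) ts by simp
    ultimately show "\<exists>W v h. v \<in> S \<and> v \<in> hm W X \<and> h \<in> hm W (Dom E (t \<cdot> s)) \<and> (t \<cdot> s) \<cdot> h = g \<cdot> v"
      using e by blast
  qed
qed

lemma ore: assumes "s \<in> S" "s \<in> hm V Y" "g \<in> hm X Y"
  obtains W v h where "v \<in> S" "v \<in> hm W X" "h \<in> hm W V" "s \<cdot> h = g \<cdot> v"
proof -
  have "Cod E s = Y" "Dom E s = V" using assms(2) unfolding hom_def by auto
  then have "\<exists>W v h. v \<in> S \<and> v \<in> hm W X \<and> h \<in> hm W V \<and> s \<cdot> h = g \<cdot> v"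
    using ore_aux[OF assms(1)] assms(3) by simp
  then show ?thesis using that by blast
qed

lemma canc_aux: assumes "s \<in> S"
  shows "\<forall>T a b. a \<in> hm T (Dom E s) \<longrightarrow> b \<in> hm T (Dom E s) \<longrightarrow> s \<cdot> a = s \<cdot> b \<longrightarrow>
     (\<exists>W r. r \<in> S \<and> r \<in> hm W T \<and> a \<cdot> r = b \<cdot> r)"
  using assms
proof (induction rule: S_A.induct)
  case (inf s)
  then obtain q where sq: "(s, q) \<in> Conf" "Cod E q \<in> A" unfolding A_inflation_def by blast
  show ?case
  proof (intro allI impI)
    fix T a b assume a: "a \<in> hm T (Dom E s)" and b: "b \<in> hm T (Dom E s)" and e: "s \<cdot> a = s \<cdot> b"
    have "a = b" using ker_mono[OF sq(1) confD(1)[OF sq(1)] a b e] .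
    moreover have TO: "T \<in> Obj E" using hom_obj[OF a] by blast
    ultimately show "\<exists>W r. r \<in> S \<and> r \<in> hm W T \<and> a \<cdot> r = b \<cdot> r" using id_S[OF TO] id_hom[OF TO] by blast
  qed
next
  case (defl s)
  then obtain k where ks: "(k, s) \<in> Conf" "Dom E k \<in> A" unfolding A_deflation_def by blast
  show ?case
  proof (intro allI impI)
    fix T a b assume a: "a \<in> hm T (Dom E s)" and b: "b \<in> hm T (Dom E s)" and e: "s \<cdot> a = s \<cdot> b"
    define Y where "Y = Dom E s"
    define Q where "Q = Cod E s"
    define K where "K = Dom E k"
    have sh: "s \<in> hm Y Q" using confD(2)[OF ks(1)] confD(1)[OF ks(1)] unfolding hom_def Y_def Q_def by auto
    have kh: "k \<in> hm K Y" using confD[OF ks(1)] unfolding hom_def Y_def K_def by auto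
    have a': "a \<in> hm T Y" "b \<in> hm T Y" using a b unfolding Y_def by auto
    define d where "d = a \<oplus> ng b"
    have dh: "d \<in> hm T Y" unfolding d_def using add_hom[OF a'(1) neg_hom[OF a'(2)]] .
    have "s \<cdot> d = Z T Q" unfolding d_def using comp_sub_zero[OF a'(1) a'(2) sh e] .
    then obtain c where c: "c \<in> hm T K" "k \<cdot> c = d" using ker_lift[OF ks(1) kh sh dh] by blast
    have KA: "K \<in> A" using ks(2) unfolding K_def .
    obtain i p m A1 where ip: "(i, p) \<in> Conf" "p \<in> hm T A1" "A1 \<in> A" "m \<in> hm A1 K" "m \<cdot> p = c" "is_mono E m"
      by (rule sP2[OF c(1) KA])
    define W where "W = Dom E i"
    have ih: "i \<in> hm W T" using confD[OF ip(1)] ip(2) unfolding W_def hom_def by auto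
    have iS: "i \<in> S" using S_infl[OF ip(1)] ip(2,3) unfolding hom_def by auto
    have O: "W \<in> Obj E" "A1 \<in> Obj E" "K \<in> Obj E" using hom_obj ih ip(2) kh by blast+
    have pi: "p \<cdot> i = Z W A1" using conf_hom[OF ip(1) ih] ip(2) unfolding hom_def by auto
    have "d \<cdot> i = k \<cdot> (c \<cdot> i)" using c(2) assoc[OF ih c(1) kh] by simp
    also have "\<dots> = k \<cdot> (m \<cdot> (p \<cdot> i))" using ip(5) assoc[OF ih ip(2) ip(4)] by simp
    also have "\<dots> = Z W Y" using pi comp_zero_r[OF ip(4) O(1)] comp_zero_r[OF kh O(1)] by simp
    finally have "(a \<oplus> ng b) \<cdot> i = Z W Y" unfolding d_def .
    then have "a \<cdot> i = b \<cdot> i" using sub_comp_zero[OF a'(1) a'(2) ih] by simp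
    then show "\<exists>W r. r \<in> S \<and> r \<in> hm W T \<and> a \<cdot> r = b \<cdot> r" using iS ih by blast
  qed
next
  case (comp s t)
  have sh: "s \<in> hm (Dom E s) (Dom E t)" using S_hom[OF comp.hyps(1)] comp.hyps(3) by simp
  have th: "t \<in> hm (Dom E t) (Cod E t)" using S_hom[OF comp.hyps(2)] .
  have ts: "Dom E (t \<cdot> s) = Dom E s" using comp_hom[OF sh th] unfolding hom_def by auto
  show ?case
  proof (intro allI impI)
    fix T a b assume a: "a \<in> hm T (Dom E (t \<cdot> s))" and b: "b \<in> hm T (Dom E (t \<cdot> s))" and e: "(t \<cdot> s) \<cdot> a = (t \<cdot> s) \<cdot> b"
    have a': "a \<in> hm T (Dom E s)" "b \<in> hm T (Dom E s)" using a b ts by auto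
    have "t \<cdot> (s \<cdot> a) = t \<cdot> (s \<cdot> b)" using e assoc[OF a'(1) sh th] assoc[OF a'(2) sh th] by simp
    moreover have "s \<cdot> a \<in> hm T (Dom E t)" "s \<cdot> b \<in> hm T (Dom E t)" using comp_hom a' sh by blast+
    ultimately obtain W2 r2 where 2: "r2 \<in> S" "r2 \<in> hm W2 T" "(s \<cdot> a) \<cdot> r2 = (s \<cdot> b) \<cdot> r2"
      using comp.IH(2) by blast
    have "s \<cdot> (a \<cdot> r2) = s \<cdot> (b \<cdot> r2)" using 2(3) assoc[OF 2(2) a'(1) sh] assoc[OF 2(2) a'(2) sh] by simp
    moreover have "a \<cdot> r2 \<in> hm W2 (Dom E s)" "b \<cdot> r2 \<in> hm W2 (Dom E s)" using comp_hom a' 2(2) by blast+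
    ultimately obtain W1 r1 where 1: "r1 \<in> S" "r1 \<in> hm W1 W2" "(a \<cdot> r2) \<cdot> r1 = (b \<cdot> r2) \<cdot> r1"
      using comp.IH(1) by blast
    have "a \<cdot> (r2 \<cdot> r1) = b \<cdot> (r2 \<cdot> r1)" using 1(3) assoc[OF 1(2) 2(2) a'(1)] assoc[OF 1(2) 2(2) a'(2)] by simp
    moreover have "r2 \<cdot> r1 \<in> S" using S_comp[OF 1(1) 2(1) 1(2) 2(2)] .
    moreover have "r2 \<cdot> r1 \<in> hm W1 T" using comp_hom[OF 1(2) 2(2)] .
    ultimately show "\<exists>W r. r \<in> S \<and> r \<in> hm W T \<and> a \<cdot> r = b \<cdot> r" by blast
  qed
qed

lemma canc: assumes "s \<in> S" "s \<in> hm V Y" "a \<in> hm T V" "b \<in> hm T V" "s \<cdot> a = s \<cdot> b"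
  obtains W r where "r \<in> S" "r \<in> hm W T" "a \<cdot> r = b \<cdot> r"
proof -
  have "Dom E s = V" using assms(2) unfolding hom_def by auto
  then have "\<exists>W r. r \<in> S \<and> r \<in> hm W T \<and> a \<cdot> r = b \<cdot> r"
    using canc_aux[OF assms(1)] assms(3-5) by simp
  then show ?thesis using that by blast
qed


lemma tail2: assumes "f \<in> hm A0 B" "g \<in> hm B C" "f' \<in> hm A0 B'" "g' \<in> hm B' C" "g \<cdot> f = g' \<cdot> f'" "x \<in> hm T A0"
  shows "g \<cdot> (f \<cdot> x) = g' \<cdot> (f' \<cdot> x)"
  using assoc[OF assms(6,1,2)] assoc[OF assms(6,3,4)] assms(5) by simp

definition PX where "PX Y X = {(t, g). t \<in> S \<and> Cod E t = Y \<and> g \<in> hm (Dom E t) X}"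

definition eqv where "eqv Y p q \<longleftrightarrow> (\<exists>X. p \<in> PX Y X \<and> q \<in> PX Y X) \<and>
  (\<exists>W u1 u2. u1 \<in> hm W (Dom E (fst p)) \<and> u2 \<in> hm W (Dom E (fst q)) \<and> fst p \<cdot> u1 = fst q \<cdot> u2 \<and>
     fst p \<cdot> u1 \<in> S \<and> snd p \<cdot> u1 = snd q \<cdot> u2)"

lemma PX_iff: "(t, g) \<in> PX Y X \<longleftrightarrow> t \<in> S \<and> Cod E t = Y \<and> g \<in> hm (Dom E t) X"
  unfolding PX_def by simp

lemma PX_t: "(t, g) \<in> PX Y X \<Longrightarrow> t \<in> hm (Dom E t) Y"
  unfolding PX_def using S_hom by auto

lemma PX_uniq: "(t, g) \<in> PX Y X \<Longrightarrow> (t, g) \<in> PX Y X' \<Longrightarrow> X = X'"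
  unfolding PX_def hom_def by auto

lemma eqv_I: assumes "(t1, g1) \<in> PX Y X" "(t2, g2) \<in> PX Y X" "u1 \<in> hm W (Dom E t1)" "u2 \<in> hm W (Dom E t2)"
   "t1 \<cdot> u1 = t2 \<cdot> u2" "t1 \<cdot> u1 \<in> S" "g1 \<cdot> u1 = g2 \<cdot> u2" shows "eqv Y (t1, g1) (t2, g2)"
  unfolding eqv_def fst_conv snd_conv using assms by blast

lemma eqv_E: assumes "eqv Y (t1, g1) (t2, g2)"
  obtains X W u1 u2 where "(t1, g1) \<in> PX Y X" "(t2, g2) \<in> PX Y X" "u1 \<in> hm W (Dom E t1)" "u2 \<in> hm W (Dom E t2)"
   "t1 \<cdot> u1 = t2 \<cdot> u2" "t1 \<cdot> u1 \<in> S" "g1 \<cdot> u1 = g2 \<cdot> u2"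
  using assms unfolding eqv_def by auto

lemma PX_uniq': "p \<in> PX Y X \<Longrightarrow> p \<in> PX Y X' \<Longrightarrow> X = X'"
  by (cases p) (use PX_uniq in blast)

lemma eqv_PX: assumes "eqv Y p q" "p \<in> PX Y X" shows "q \<in> PX Y X"
proof -
  obtain X' where "p \<in> PX Y X'" "q \<in> PX Y X'" using assms(1) unfolding eqv_def by blast
  then show ?thesis using PX_uniq'[OF assms(2)] by blast
qed

lemma eqv_refl: assumes "p \<in> PX Y X" shows "eqv Y p p"
proof -
  obtain t g where p: "p = (t, g)" by (cases p) auto
  have t: "t \<in> S" "t \<in> hm (Dom E t) Y" using assms p PX_t unfolding PX_def by auto
  have DO: "Dom E t \<in> Obj E" using hom_obj[OF t(2)] by blast
  show ?thesis unfolding p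
    by (rule eqv_I[OF assms[unfolded p] assms[unfolded p] id_hom[OF DO] id_hom[OF DO]])
       (use t assms p PX_iff in auto)
qed

lemma eqv_sym: "eqv Y p q \<Longrightarrow> eqv Y q p"
  unfolding eqv_def by (auto) (metis)

lemma eqv_trans: assumes "eqv Y p q" "eqv Y q r" shows "eqv Y p r"
proof -
  obtain t1 g1 where p: "p = (t1, g1)" by (cases p) auto
  obtain t2 g2 where q: "q = (t2, g2)" by (cases q) auto
  obtain t3 g3 where r: "r = (t3, g3)" by (cases r) auto
  obtain X W u1 u2 where A: "(t1, g1) \<in> PX Y X" "(t2, g2) \<in> PX Y X" "u1 \<in> hm W (Dom E t1)" "u2 \<in> hm W (Dom E t2)"
     "t1 \<cdot> u1 = t2 \<cdot> u2" "t1 \<cdot> u1 \<in> S" "g1 \<cdot> u1 = g2 \<cdot> u2"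
    using eqv_E assms(1) p q by metis
  obtain X' W' v2 v3 where B: "(t2, g2) \<in> PX Y X'" "(t3, g3) \<in> PX Y X'" "v2 \<in> hm W' (Dom E t2)" "v3 \<in> hm W' (Dom E t3)"
     "t2 \<cdot> v2 = t3 \<cdot> v3" "t2 \<cdot> v2 \<in> S" "g2 \<cdot> v2 = g3 \<cdot> v3"
    using eqv_E assms(2) q r by metis
  have XX: "X' = X" using PX_uniq A(2) B(1) by blast
  define D1 where "D1 = Dom E t1"
  define D2 where "D2 = Dom E t2"
  define D3 where "D3 = Dom E t3"
  have t1: "t1 \<in> hm D1 Y" "t1 \<in> S" and g1: "g1 \<in> hm D1 X" using A(1) PX_t unfolding D1_def PX_iff by auto
  have t2: "t2 \<in> hm D2 Y" "t2 \<in> S" and g2: "g2 \<in> hm D2 X" using A(2) PX_t unfolding D2_def PX_iff by auto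
  have t3: "t3 \<in> hm D3 Y" "t3 \<in> S" and g3: "g3 \<in> hm D3 X" using B(2) PX_t XX unfolding D3_def PX_iff by auto
  have u1: "u1 \<in> hm W D1" and u2: "u2 \<in> hm W D2" and v2: "v2 \<in> hm W' D2" and v3: "v3 \<in> hm W' D3"
    using A(3,4) B(3,4) unfolding D1_def D2_def D3_def by auto
  have \<sigma>h: "t2 \<cdot> v2 \<in> hm W' Y" using comp_hom[OF v2 t2(1)] .
  obtain W'' w z where C: "w \<in> S" "w \<in> hm W'' W" "z \<in> hm W'' W'" "(t2 \<cdot> v2) \<cdot> z = (t2 \<cdot> u2) \<cdot> w"
    by (rule ore[OF B(6) \<sigma>h comp_hom[OF u2 t2(1)]])
  have "t2 \<cdot> (v2 \<cdot> z) = t2 \<cdot> (u2 \<cdot> w)" using C(4) assoc[OF C(3) v2 t2(1)] assoc[OF C(2) u2 t2(1)] by simp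
  then obtain W3 r where R: "r \<in> S" "r \<in> hm W3 W''" "(v2 \<cdot> z) \<cdot> r = (u2 \<cdot> w) \<cdot> r"
    using canc[OF t2(2) t2(1) comp_hom[OF C(3) v2] comp_hom[OF C(2) u2]] by blast
  have wr: "w \<cdot> r \<in> hm W3 W" "z \<cdot> r \<in> hm W3 W'" using comp_hom C R by blast+
  have key: "u2 \<cdot> (w \<cdot> r) = v2 \<cdot> (z \<cdot> r)" using R(3) assoc[OF R(2) C(2) u2] assoc[OF R(2) C(3) v2] by simp
  have e1: "t1 \<cdot> (u1 \<cdot> (w \<cdot> r)) = t3 \<cdot> (v3 \<cdot> (z \<cdot> r))"
  proof -
    have "t1 \<cdot> (u1 \<cdot> (w \<cdot> r)) = t2 \<cdot> (u2 \<cdot> (w \<cdot> r))" using tail2[OF u1 t1(1) u2 t2(1) A(5) wr(1)] .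
    also have "\<dots> = t2 \<cdot> (v2 \<cdot> (z \<cdot> r))" using key by simp
    also have "\<dots> = t3 \<cdot> (v3 \<cdot> (z \<cdot> r))" using tail2[OF v2 t2(1) v3 t3(1) B(5) wr(2)] .
    finally show ?thesis .
  qed
  have e2: "g1 \<cdot> (u1 \<cdot> (w \<cdot> r)) = g3 \<cdot> (v3 \<cdot> (z \<cdot> r))"
  proof -
    have "g1 \<cdot> (u1 \<cdot> (w \<cdot> r)) = g2 \<cdot> (u2 \<cdot> (w \<cdot> r))" using tail2[OF u1 g1 u2 g2 A(7) wr(1)] .
    also have "\<dots> = g2 \<cdot> (v2 \<cdot> (z \<cdot> r))" using key by simp
    also have "\<dots> = g3 \<cdot> (v3 \<cdot> (z \<cdot> r))" using tail2[OF v2 g2 v3 g3 B(7) wr(2)] .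
    finally show ?thesis .
  qed
  have "(t1 \<cdot> u1) \<cdot> (w \<cdot> r) \<in> S"
    using S_comp[OF S_comp[OF R(1) C(1) R(2) C(2)] A(6) wr(1) comp_hom[OF u1 t1(1)]] .
  then have sS: "t1 \<cdot> (u1 \<cdot> (w \<cdot> r)) \<in> S" using assoc[OF wr(1) u1 t1(1)] by simp
  have P3: "(t3, g3) \<in> PX Y X" using B(2) XX by simp
  show ?thesis unfolding p r
    by (rule eqv_I[OF A(1) P3 comp_hom[OF wr(1) u1, unfolded D1_def] comp_hom[OF wr(2) v3, unfolded D3_def] e1 sS e2])
qed

lemma eqv_post: assumes "eqv Y (t1, g1) (t2, g2)" "(t1, g1) \<in> PX Y X" "h \<in> hm X X'"
  shows "eqv Y (t1, h \<cdot> g1) (t2, h \<cdot> g2)"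
proof -
  obtain X0 W u1 u2 where A: "(t1, g1) \<in> PX Y X0" "(t2, g2) \<in> PX Y X0" "u1 \<in> hm W (Dom E t1)" "u2 \<in> hm W (Dom E t2)"
     "t1 \<cdot> u1 = t2 \<cdot> u2" "t1 \<cdot> u1 \<in> S" "g1 \<cdot> u1 = g2 \<cdot> u2"
    using eqv_E assms(1) by metis
  have "X0 = X" using PX_uniq A(1) assms(2) by blast
  then have g: "g1 \<in> hm (Dom E t1) X" "g2 \<in> hm (Dom E t2) X" using A(1,2) unfolding PX_iff by auto
  have P1: "(t1, h \<cdot> g1) \<in> PX Y X'" "(t2, h \<cdot> g2) \<in> PX Y X'"
    using A(1,2) comp_hom[OF g(1) assms(3)] comp_hom[OF g(2) assms(3)] unfolding PX_iff by auto
  have "(h \<cdot> g1) \<cdot> u1 = (h \<cdot> g2) \<cdot> u2"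
    using A(7) assoc[OF A(3) g(1) assms(3)] assoc[OF A(4) g(2) assms(3)] by simp
  then show ?thesis using eqv_I[OF P1 A(3,4,5,6)] by simp
qed

lemma relcat_Y: "relcat (Obj E) (PX Y) (eqv Y)"
proof
  show "\<And>X p. X \<in> Obj E \<Longrightarrow> p \<in> PX Y X \<Longrightarrow> eqv Y p p" using eqv_refl by blast
  show "\<And>p q. eqv Y p q \<Longrightarrow> eqv Y q p" using eqv_sym by blast
  show "\<And>p q r. eqv Y p q \<Longrightarrow> eqv Y q r \<Longrightarrow> eqv Y p r" using eqv_trans by blast
  show "\<And>p q X. eqv Y p q \<Longrightarrow> p \<in> PX Y X \<Longrightarrow> q \<in> PX Y X" using eqv_PX by blast
qed


abbreviation DY where "DY Y \<equiv> RC (Obj E) (PX Y) (eqv Y)"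

definition FR where "FR Y h = {(p, q). p \<in> PX Y (Dom E h) \<and> q \<in> PX Y (Cod E h) \<and> eqv Y (fst p, h \<cdot> snd p) q}"
definition Fm where "Fm Y h = mk (Dom E h) (Cod E h) (FR Y h)"

lemma PX_post: "(t, g) \<in> PX Y X \<Longrightarrow> h \<in> hm X X' \<Longrightarrow> (t, h \<cdot> g) \<in> PX Y X'"
  unfolding PX_iff using comp_hom by blast

lemma eqv_post': assumes "eqv Y p' p" "p \<in> PX Y X" "h \<in> hm X X'"
  shows "eqv Y (fst p', h \<cdot> snd p') (fst p, h \<cdot> snd p)"
proof -
  obtain t g where p: "p = (t, g)" by (cases p) auto
  obtain t' g' where p': "p' = (t', g')" by (cases p') auto
  have "p' \<in> PX Y X" using eqv_PX[OF eqv_sym[OF assms(1)] assms(2)] .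
  then show ?thesis using eqv_post[of Y t' g' t g X h X'] assms p p' by simp
qed

lemma sat_FR: assumes "h \<in> hm X X'" shows "sat (PX Y) (eqv Y) X X' (FR Y h)"
proof -
  have d: "Dom E h = X" "Cod E h = X'" using assms unfolding hom_def by auto
  show ?thesis unfolding sat_def
  proof (intro conjI allI impI)
    show "FR Y h \<subseteq> PX Y X \<times> PX Y X'" unfolding FR_def d by auto
    fix p q p' q' assume pq: "(p, q) \<in> FR Y h" and e1: "eqv Y p' p" and e2: "eqv Y q q'"
    have p: "p \<in> PX Y X" "q \<in> PX Y X'" "eqv Y (fst p, h \<cdot> snd p) q" using pq unfolding FR_def d by auto
    have p'X: "p' \<in> PX Y X" using eqv_PX[OF eqv_sym[OF e1] p(1)] .
    have q'X: "q' \<in> PX Y X'" using eqv_PX[OF e2 p(2)] .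
    have "eqv Y (fst p', h \<cdot> snd p') q'"
      using eqv_trans[OF eqv_trans[OF eqv_post'[OF e1 p(1) assms] p(3)] e2] .
    then show "(p', q') \<in> FR Y h" using p'X q'X unfolding FR_def d by auto
  qed
qed

lemma Fm_hom: assumes "h \<in> hm X X'" shows "Fm Y h \<in> hom (DY Y) X X'"
proof -
  have "X \<in> Obj E" "X' \<in> Obj E" using hom_obj[OF assms] by auto
  then show ?thesis using relcat.mk_in_hom[OF relcat_Y _ _ sat_FR[OF assms]] assms unfolding Fm_def hom_def by auto
qed

lemma FR_id: assumes "X \<in> Obj E" shows "FR Y (Id E X) = eqvon (PX Y) (eqv Y) X"
proof -
  have d: "Dom E (Id E X) = X" "Cod E (Id E X) = X" using id_hom[OF assms] unfolding hom_def by auto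
  have "\<And>p. p \<in> PX Y X \<Longrightarrow> Id E X \<cdot> snd p = snd p"
  proof -
    fix p assume "p \<in> PX Y X" then obtain t g where "p = (t, g)" "g \<in> hm (Dom E t) X" unfolding PX_def by auto
    then show "Id E X \<cdot> snd p = snd p" by simp
  qed
  then show ?thesis unfolding FR_def eqvon_def d by auto
qed

lemma FR_comp: assumes "f \<in> hm X X'" "g \<in> hm X' X''" shows "FR Y (g \<cdot> f) = FR Y f O FR Y g"
proof -
  have d: "Dom E (g \<cdot> f) = X" "Cod E (g \<cdot> f) = X''" "Dom E f = X" "Cod E f = X'" "Dom E g = X'" "Cod E g = X''"
    using assms comp_hom[OF assms] unfolding hom_def by auto
  have as: "\<And>p. p \<in> PX Y X \<Longrightarrow> (g \<cdot> f) \<cdot> snd p = g \<cdot> (f \<cdot> snd p)"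
  proof -
    fix p assume "p \<in> PX Y X" then obtain t x where "p = (t, x)" "x \<in> hm (Dom E t) X" unfolding PX_def by auto
    then show "(g \<cdot> f) \<cdot> snd p = g \<cdot> (f \<cdot> snd p)" using assoc[OF _ assms] by simp
  qed
  show ?thesis
  proof (intro set_eqI iffI)
    fix x assume "x \<in> FR Y (g \<cdot> f)"
    then obtain p q where x: "x = (p, q)" "p \<in> PX Y X" "q \<in> PX Y X''" "eqv Y (fst p, (g \<cdot> f) \<cdot> snd p) q"
      unfolding FR_def d by auto
    obtain t y where p: "p = (t, y)" by (cases p) auto
    have m: "(t, f \<cdot> y) \<in> PX Y X'" using PX_post[OF x(2)[unfolded p] assms(1)] .
    have "(p, (t, f \<cdot> y)) \<in> FR Y f" using x m eqv_refl[OF m] unfolding FR_def d p by auto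
    moreover have "((t, f \<cdot> y), q) \<in> FR Y g" using x m as[OF x(2)] unfolding FR_def d p by auto
    ultimately show "x \<in> FR Y f O FR Y g" using x by blast
  next
    fix x assume "x \<in> FR Y f O FR Y g"
    then obtain p m q where x: "x = (p, q)" "(p, m) \<in> FR Y f" "(m, q) \<in> FR Y g" by blast
    have A: "p \<in> PX Y X" "m \<in> PX Y X'" "eqv Y (fst p, f \<cdot> snd p) m" using x(2) unfolding FR_def d by auto
    have B: "q \<in> PX Y X''" "eqv Y (fst m, g \<cdot> snd m) q" using x(3) unfolding FR_def d by auto
    obtain t y where p: "p = (t, y)" by (cases p) auto
    have m1: "(t, f \<cdot> y) \<in> PX Y X'" using PX_post[OF A(1)[unfolded p] assms(1)] .
    have "eqv Y (t, g \<cdot> (f \<cdot> y)) (fst m, g \<cdot> snd m)"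
      using eqv_post'[OF A(3) A(2) assms(2)] p by simp
    then have "eqv Y (t, g \<cdot> (f \<cdot> y)) q" using eqv_trans B(2) by blast
    then show "x \<in> FR Y (g \<cdot> f)" using x A(1) B(1) as[OF A(1)] unfolding FR_def d p by auto
  qed
qed

lemma F_functor: "is_functor E (DY Y) (\<lambda>x. x) (Fm Y)"
proof -
  have 1: "\<forall>a\<in>Obj E. a \<in> Obj (DY Y)" using relcat.D_simps[OF relcat_Y] by simp
  have 2: "\<forall>f\<in>Arr E. Fm Y f \<in> Arr (DY Y) \<and> Dom (DY Y) (Fm Y f) = Dom E f \<and> Cod (DY Y) (Fm Y f) = Cod E f"
  proof
    fix f assume "f \<in> Arr E"
    then have "Fm Y f \<in> hom (DY Y) (Dom E f) (Cod E f)" using Fm_hom arr_hom by blast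
    then show "Fm Y f \<in> Arr (DY Y) \<and> Dom (DY Y) (Fm Y f) = Dom E f \<and> Cod (DY Y) (Fm Y f) = Cod E f"
      unfolding hom_def by simp
  qed
  have 3: "\<forall>a\<in>Obj E. Fm Y (Id E a) = Id (DY Y) a"
  proof
    fix a assume a: "a \<in> Obj E"
    have d: "Dom E (Id E a) = a" "Cod E (Id E a) = a" using id_hom[OF a] unfolding hom_def by auto
    show "Fm Y (Id E a) = Id (DY Y) a" unfolding Fm_def d FR_id[OF a] using relcat.D_simps[OF relcat_Y] by simp
  qed
  have 4: "\<forall>f\<in>Arr E. \<forall>g\<in>Arr E. Cod E f = Dom E g \<longrightarrow> Fm Y (g \<cdot> f) = Comp (DY Y) (Fm Y g) (Fm Y f)"
  proof (intro ballI impI)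
    fix f g assume f: "f \<in> Arr E" and g: "g \<in> Arr E" and c: "Cod E f = Dom E g"
    have fh: "f \<in> hm (Dom E f) (Dom E g)" using arr_hom[OF f] c by simp
    have gh: "g \<in> hm (Dom E g) (Cod E g)" using arr_hom[OF g] .
    have d: "Dom E (g \<cdot> f) = Dom E f" "Cod E (g \<cdot> f) = Cod E g" using comp_hom[OF fh gh] unfolding hom_def by auto
    show "Fm Y (g \<cdot> f) = Comp (DY Y) (Fm Y g) (Fm Y f)"
      unfolding Fm_def d FR_comp[OF fh gh] using relcat.D_simps[OF relcat_Y] by simp
  qed
  show ?thesis unfolding is_functor_def using 1 2 3 4 by blast
qed

lemma FR_surj: assumes "s \<in> S" "s \<in> hm X X'" "q \<in> PX Y X'"
  shows "\<exists>p. p \<in> PX Y X \<and> eqv Y (fst p, s \<cdot> snd p) q"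
proof -
  obtain t g' where q: "q = (t, g')" by (cases q) auto
  have t: "t \<in> S" "t \<in> hm (Dom E t) Y" "g' \<in> hm (Dom E t) X'" using assms(3) PX_t unfolding q PX_iff by auto
  obtain W v h where o: "v \<in> S" "v \<in> hm W (Dom E t)" "h \<in> hm W X" "s \<cdot> h = g' \<cdot> v"
    by (rule ore[OF assms(1,2) t(3)])
  have tv: "t \<cdot> v \<in> hm W Y" using comp_hom[OF o(2) t(2)] .
  have p: "(t \<cdot> v, h) \<in> PX Y X" using S_comp[OF o(1) t(1) o(2) t(2)] tv o(3) unfolding PX_iff hom_def by auto
  have WO: "W \<in> Obj E" using hom_obj[OF o(3)] by blast
  have "eqv Y (t \<cdot> v, s \<cdot> h) (t, g')"
  proof (rule eqv_I[OF PX_post[OF p assms(2)] assms(3)[unfolded q]])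
    show "Id E W \<in> hm W (Dom E (t \<cdot> v))" using id_hom[OF WO] tv unfolding hom_def by auto
    show "v \<in> hm W (Dom E t)" by fact
    show "(t \<cdot> v) \<cdot> Id E W = t \<cdot> v" using tv by simp
    show "(t \<cdot> v) \<cdot> Id E W \<in> S" using tv S_comp[OF o(1) t(1) o(2) t(2)] by simp
    show "(s \<cdot> h) \<cdot> Id E W = g' \<cdot> v" using comp_hom[OF o(3) assms(2)] o(4) by simp
  qed
  then show ?thesis using p q by auto
qed

lemma FR_inj: assumes "s \<in> S" "s \<in> hm X X'" "p \<in> PX Y X" "p' \<in> PX Y X"
  "eqv Y (fst p, s \<cdot> snd p) (fst p', s \<cdot> snd p')" shows "eqv Y p p'"
proof -
  obtain t1 g1 where p: "p = (t1, g1)" by (cases p) auto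
  obtain t2 g2 where p': "p' = (t2, g2)" by (cases p') auto
  have g: "g1 \<in> hm (Dom E t1) X" "g2 \<in> hm (Dom E t2) X" "t1 \<in> hm (Dom E t1) Y" "t2 \<in> hm (Dom E t2) Y"
    using assms(3,4) PX_t[OF assms(3)[unfolded p]] PX_t[OF assms(4)[unfolded p']] unfolding p p' PX_iff by auto
  obtain X0 W u1 u2 where A: "u1 \<in> hm W (Dom E t1)" "u2 \<in> hm W (Dom E t2)"
     "t1 \<cdot> u1 = t2 \<cdot> u2" "t1 \<cdot> u1 \<in> S" "(s \<cdot> g1) \<cdot> u1 = (s \<cdot> g2) \<cdot> u2"
    using eqv_E assms(5) p p' by (metis fst_conv snd_conv)
  have "s \<cdot> (g1 \<cdot> u1) = s \<cdot> (g2 \<cdot> u2)" using A(5) assoc[OF A(1) g(1) assms(2)] assoc[OF A(2) g(2) assms(2)] by simp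
  then obtain W' r where R: "r \<in> S" "r \<in> hm W' W" "(g1 \<cdot> u1) \<cdot> r = (g2 \<cdot> u2) \<cdot> r"
    using canc[OF assms(1,2) comp_hom[OF A(1) g(1)] comp_hom[OF A(2) g(2)]] by blast
  have e1: "t1 \<cdot> (u1 \<cdot> r) = t2 \<cdot> (u2 \<cdot> r)" using tail2[OF A(1) g(3) A(2) g(4) A(3) R(2)] .
  have e2: "g1 \<cdot> (u1 \<cdot> r) = g2 \<cdot> (u2 \<cdot> r)" using R(3) assoc[OF R(2) A(1) g(1)] assoc[OF R(2) A(2) g(2)] by simp
  have "(t1 \<cdot> u1) \<cdot> r \<in> S" using S_comp[OF R(1) A(4) R(2) comp_hom[OF A(1) g(3)]] .
  then have e3: "t1 \<cdot> (u1 \<cdot> r) \<in> S" using assoc[OF R(2) A(1) g(3)] by simp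
  show ?thesis unfolding p p'
    by (rule eqv_I[OF assms(3)[unfolded p] assms(4)[unfolded p'] comp_hom[OF R(2) A(1)] comp_hom[OF R(2) A(2)] e1 e3 e2])
qed

lemma Fm_iso: assumes "s \<in> S" shows "is_iso (DY Y) (Fm Y s)"
proof -
  define X where "X = Dom E s"
  define X' where "X' = Cod E s"
  have sh: "s \<in> hm X X'" using S_hom[OF assms] unfolding X_def X'_def .
  have O: "X \<in> Obj E" "X' \<in> Obj E" using hom_obj[OF sh] by auto
  have d: "Dom E s = X" "Cod E s = X'" unfolding X_def X'_def by auto
  have satc: "sat (PX Y) (eqv Y) X' X ((FR Y s)\<inverse>)"
    using sat_FR[OF sh] eqv_sym unfolding sat_def by blast
  define G where "G = mk X' X ((FR Y s)\<inverse>)"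
  have Gh: "G \<in> hom (DY Y) X' X" unfolding G_def using relcat.mk_in_hom[OF relcat_Y O(2) O(1) satc] .
  have Fh: "Fm Y s \<in> hom (DY Y) X X'" using Fm_hom[OF sh] .
  have 1: "FR Y s O (FR Y s)\<inverse> = eqvon (PX Y) (eqv Y) X"
  proof (intro set_eqI iffI)
    fix x assume "x \<in> FR Y s O (FR Y s)\<inverse>"
    then obtain p q p' where x: "x = (p, p')" "(p, q) \<in> FR Y s" "(p', q) \<in> FR Y s" by blast
    have A: "p \<in> PX Y X" "p' \<in> PX Y X" "eqv Y (fst p, s \<cdot> snd p) q" "eqv Y (fst p', s \<cdot> snd p') q"
      using x unfolding FR_def d by auto
    have "eqv Y p p'" using FR_inj[OF assms sh A(1,2) eqv_trans[OF A(3) eqv_sym[OF A(4)]]] .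
    then show "x \<in> eqvon (PX Y) (eqv Y) X" using x A unfolding eqvon_def by auto
  next
    fix x assume "x \<in> eqvon (PX Y) (eqv Y) X"
    then obtain p p' where x: "x = (p, p')" "p \<in> PX Y X" "p' \<in> PX Y X" "eqv Y p p'" unfolding eqvon_def by auto
    obtain t g where p: "p = (t, g)" by (cases p) auto
    have m: "(t, s \<cdot> g) \<in> PX Y X'" using PX_post[OF x(2)[unfolded p] sh] .
    have "(p, (t, s \<cdot> g)) \<in> FR Y s" using x(2) m eqv_refl[OF m] unfolding FR_def d p by auto
    moreover have "(p', (t, s \<cdot> g)) \<in> FR Y s"
      using x(3) m eqv_post'[OF eqv_sym[OF x(4)] x(2) sh] unfolding FR_def d p by auto
    ultimately show "x \<in> FR Y s O (FR Y s)\<inverse>" using x by blast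
  qed
  have 2: "(FR Y s)\<inverse> O FR Y s = eqvon (PX Y) (eqv Y) X'"
  proof (intro set_eqI iffI)
    fix x assume "x \<in> (FR Y s)\<inverse> O FR Y s"
    then obtain p q q' where x: "x = (q, q')" "(p, q) \<in> FR Y s" "(p, q') \<in> FR Y s" by blast
    have A: "q \<in> PX Y X'" "q' \<in> PX Y X'" "eqv Y (fst p, s \<cdot> snd p) q" "eqv Y (fst p, s \<cdot> snd p) q'"
      using x unfolding FR_def d by auto
    have "eqv Y q q'" using eqv_trans[OF eqv_sym[OF A(3)] A(4)] .
    then show "x \<in> eqvon (PX Y) (eqv Y) X'" using x A unfolding eqvon_def by auto
  next
    fix x assume "x \<in> eqvon (PX Y) (eqv Y) X'"
    then obtain q q' where x: "x = (q, q')" "q \<in> PX Y X'" "q' \<in> PX Y X'" "eqv Y q q'" unfolding eqvon_def by auto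
    obtain p where p: "p \<in> PX Y X" "eqv Y (fst p, s \<cdot> snd p) q" using FR_surj[OF assms sh x(2)] by blast
    have "(p, q) \<in> FR Y s" using p x unfolding FR_def d by auto
    moreover have "(p, q') \<in> FR Y s" using p x eqv_trans[OF p(2) x(4)] unfolding FR_def d by auto
    ultimately show "x \<in> (FR Y s)\<inverse> O FR Y s" using x by blast
  qed
  have c1: "Comp (DY Y) G (Fm Y s) = Id (DY Y) X"
    unfolding G_def Fm_def d using relcat.D_simps[OF relcat_Y] 1 by simp
  have c2: "Comp (DY Y) (Fm Y s) G = Id (DY Y) X'"
    unfolding G_def Fm_def d using relcat.D_simps[OF relcat_Y] 2 by simp
  show ?thesis using gc_iso_I[OF Fh Gh c1 c2] .
qed


lemma loc_F: assumes "localization_iso E S f" shows "is_iso (DY Y) (Fm Y f)"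
proof -
  have "is_category (DY Y)" using relcat.is_cat[OF relcat_Y] .
  moreover have "is_functor E (DY Y) (\<lambda>x. x) (Fm Y)" using F_functor .
  moreover have "\<forall>s\<in>S. is_iso (DY Y) (Fm Y s)" using Fm_iso by blast
  ultimately show ?thesis using assms unfolding localization_iso_def by blast
qed

lemma DY_arr: assumes "G \<in> hom (DY Y) X X'" obtains R where "G = mk X X' R" "sat (PX Y) (eqv Y) X X' R"
proof -
  have "G \<in> Arr (DY Y)" using assms unfolding hom_def by simp
  then obtain X0 X0' R where G: "G = mk X0 X0' R" "sat (PX Y) (eqv Y) X0 X0' R"
    using relcat.arrE[OF relcat_Y] by metis
  have "Dom (DY Y) G = X" "Cod (DY Y) G = X'" using assms unfolding hom_def by auto
  then have "X0 = X" "X0' = X'" using G relcat.D_simps[OF relcat_Y] by auto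
  then show ?thesis using that G by blast
qed

lemma p0_PX: assumes "Y \<in> Obj E" shows "(Id E Y, Id E Y) \<in> PX Y Y"
  using id_S[OF assms] id_hom[OF assms] unfolding PX_iff hom_def by auto

lemma ext1: assumes "localization_iso E S f" "f \<in> hm X Y"
  obtains W h where "h \<in> hm W X" "f \<cdot> h \<in> S"
proof -
  have O: "X \<in> Obj E" "Y \<in> Obj E" using hom_obj[OF assms(2)] by auto
  have C: "is_category (DY Y)" using relcat.is_cat[OF relcat_Y] .
  have Fh: "Fm Y f \<in> hom (DY Y) X Y" using Fm_hom[OF assms(2)] .
  obtain G where G: "G \<in> hom (DY Y) Y X" "Comp (DY Y) G (Fm Y f) = Id (DY Y) X" "Comp (DY Y) (Fm Y f) G = Id (DY Y) Y"
    using gc_iso_D[OF loc_F[OF assms(1)] Fh] by blast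
  obtain R where R: "G = mk Y X R" "sat (PX Y) (eqv Y) Y X R" using DY_arr[OF G(1)] by blast
  have d: "Dom E f = X" "Cod E f = Y" using assms(2) unfolding hom_def by auto
  have "mk Y Y (R O FR Y f) = mk Y Y (eqvon (PX Y) (eqv Y) Y)"
    using G(3) R(1) relcat.D_simps[OF relcat_Y] unfolding Fm_def d by simp
  then have e: "R O FR Y f = eqvon (PX Y) (eqv Y) Y" using mk_eq_iff by metis
  define p0 where "p0 = (Id E Y, Id E Y)"
  have p0: "p0 \<in> PX Y Y" using p0_PX[OF O(2)] unfolding p0_def .
  have "(p0, p0) \<in> eqvon (PX Y) (eqv Y) Y" using p0 eqv_refl[OF p0] unfolding eqvon_def by auto
  then obtain m where m: "(p0, m) \<in> R" "(m, p0) \<in> FR Y f" using e by blast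
  have mX: "m \<in> PX Y X" "eqv Y (fst m, f \<cdot> snd m) p0" using m(2) unfolding FR_def d by auto
  obtain t g where mt: "m = (t, g)" by (cases m) auto
  have tg: "t \<in> S" "t \<in> hm (Dom E t) Y" "g \<in> hm (Dom E t) X" using mX(1) PX_t[OF mX(1)[unfolded mt]] unfolding mt PX_iff by auto
  obtain X0 W u1 u2 where A: "u1 \<in> hm W (Dom E t)" "u2 \<in> hm W (Dom E (Id E Y))"
     "t \<cdot> u1 = Id E Y \<cdot> u2" "t \<cdot> u1 \<in> S" "(f \<cdot> g) \<cdot> u1 = Id E Y \<cdot> u2"
    using eqv_E mX(2) unfolding mt p0_def by (metis fst_conv snd_conv)
  have u2: "u2 \<in> hm W Y" using A(2) id_hom[OF O(2)] unfolding hom_def by auto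
  have "f \<cdot> (g \<cdot> u1) = t \<cdot> u1" using A(3,5) u2 assoc[OF A(1) tg(3) assms(2)] by simp
  then show ?thesis using that[OF comp_hom[OF A(1) tg(3)]] A(4) by simp
qed

lemma ext2: assumes "localization_iso E S e" "e \<in> hm K W" "c \<in> hm W K" "e \<cdot> c = Id E W"
  obtains V u where "u \<in> S" "u \<in> hm V K" "c \<cdot> (e \<cdot> u) = u"
proof -
  have O: "K \<in> Obj E" "W \<in> Obj E" using hom_obj[OF assms(2)] by auto
  have C: "is_category (DY K)" using relcat.is_cat[OF relcat_Y] .
  have F: "is_functor E (DY K) (\<lambda>x. x) (Fm K)" using F_functor .
  have Fe: "Fm K e \<in> hom (DY K) K W" using Fm_hom[OF assms(2)] .
  have Fc: "Fm K c \<in> hom (DY K) W K" using Fm_hom[OF assms(3)] .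
  have "Comp (DY K) (Fm K e) (Fm K c) = Fm K (e \<cdot> c)" using functor_comp[OF F assms(3,2)] by simp
  also have "\<dots> = Id (DY K) W" using assms(4) functor_id[OF F O(2)] by simp
  finally have "Comp (DY K) (Fm K c) (Fm K e) = Id (DY K) K" using gc_rinv[OF C loc_F[OF assms(1)] Fe Fc] by blast
  then have "Fm K (c \<cdot> e) = Id (DY K) K" using functor_comp[OF F assms(2,3)] by simp
  moreover have "Dom E (c \<cdot> e) = K" "Cod E (c \<cdot> e) = K" using comp_hom[OF assms(2,3)] unfolding hom_def by auto
  ultimately have "mk K K (FR K (c \<cdot> e)) = mk K K (eqvon (PX K) (eqv K) K)"
    using relcat.D_simps[OF relcat_Y] unfolding Fm_def by simp
  then have e: "FR K (c \<cdot> e) = eqvon (PX K) (eqv K) K" using mk_eq_iff by metis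
  define p0 where "p0 = (Id E K, Id E K)"
  have p0: "p0 \<in> PX K K" using p0_PX[OF O(1)] unfolding p0_def .
  have "(p0, p0) \<in> eqvon (PX K) (eqv K) K" using p0 eqv_refl[OF p0] unfolding eqvon_def by auto
  then have "(p0, p0) \<in> FR K (c \<cdot> e)" using e by simp
  then have "eqv K (Id E K, (c \<cdot> e) \<cdot> Id E K) (Id E K, Id E K)" unfolding FR_def p0_def by simp
  then obtain X0 V u1 u2 where A: "u1 \<in> hm V (Dom E (Id E K))" "u2 \<in> hm V (Dom E (Id E K))"
     "Id E K \<cdot> u1 = Id E K \<cdot> u2" "Id E K \<cdot> u1 \<in> S" "((c \<cdot> e) \<cdot> Id E K) \<cdot> u1 = Id E K \<cdot> u2"
    by (rule eqv_E)
  have u: "u1 \<in> hm V K" "u2 \<in> hm V K" using A(1,2) id_hom[OF O(1)] unfolding hom_def by auto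
  have "u1 = u2" using A(3) u by simp
  moreover have "u1 \<in> S" using A(4) u by simp
  moreover have "(c \<cdot> e) \<cdot> u1 = u1" using A(5) u \<open>u1 = u2\<close> comp_hom[OF assms(2,3)] by simp
  then have "c \<cdot> (e \<cdot> u1) = u1" using assoc[OF u(1) assms(2,3)] by simp
  ultimately show ?thesis using that u by blast
qed

lemma loc_cancel: assumes "localization_iso E S f" "f \<in> hm X Y" "s \<in> S" "s \<in> hm X' X" "t \<in> S" "t \<in> hm W Y"
  "f' \<in> hm X' W" "f \<cdot> s = t \<cdot> f'" shows "localization_iso E S f'"
  unfolding localization_iso_def
proof (intro allI impI)
  fix D :: "('o, ('o \<times> 'o \<times> ('m \<times> bool) list) set) category" and Fo Fm'
  assume C: "is_category D" and F: "is_functor E D Fo Fm'" and I: "\<forall>s\<in>S. is_iso D (Fm' s)"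
  have "is_iso D (Fm' f)" using assms(1) C F I unfolding localization_iso_def by blast
  then have "is_iso D (Comp D (Fm' f) (Fm' s))"
    using gc_iso_comp[OF C I[rule_format, OF assms(3)] _ functor_hom[OF F assms(4)] functor_hom[OF F assms(2)]] by blast
  then have "is_iso D (Comp D (Fm' t) (Fm' f'))"
    using functor_comp[OF F assms(4,2)] functor_comp[OF F assms(7,6)] assms(8) by simp
  then show "is_iso D (Fm' f')"
    using gc_iso_cancel[OF C I[rule_format, OF assms(5)] _ functor_hom[OF F assms(6)] functor_hom[OF F assms(7)]] by blast
qed


lemma peel_aux: assumes "t \<in> S"
  shows "\<forall>X f h r W0. f \<in> hm X (Cod E t) \<longrightarrow> h \<in> hm W0 X \<longrightarrow> r \<in> hm W0 (Dom E t) \<longrightarrow> f \<cdot> h = t \<cdot> r \<longrightarrow>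
    (\<exists>K s f' c. s \<in> S \<and> s \<in> hm K X \<and> f' \<in> hm K (Dom E t) \<and> c \<in> hm W0 K \<and> f \<cdot> s = t \<cdot> f' \<and> f' \<cdot> c = r)"
  using assms
proof (induction rule: S_A.induct)
  case (inf t)
  then obtain q where tq: "(t, q) \<in> Conf" "Cod E q \<in> A" unfolding A_inflation_def by blast
  show ?case
  proof (intro allI impI)
    fix X f h r W0 assume f: "f \<in> hm X (Cod E t)" and h: "h \<in> hm W0 X" and r: "r \<in> hm W0 (Dom E t)" and e: "f \<cdot> h = t \<cdot> r"
    define V where "V = Dom E t"
    define Y where "Y = Cod E t"
    define A0 where "A0 = Cod E q"
    have th: "t \<in> hm V Y" using confD(1)[OF tq(1)] unfolding V_def Y_def .
    have qh: "q \<in> hm Y A0" using confD(2)[OF tq(1)] unfolding Y_def A0_def .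
    have fh: "f \<in> hm X Y" using f unfolding Y_def .
    have rh: "r \<in> hm W0 V" using r unfolding V_def .
    have A0A: "A0 \<in> A" using tq(2) unfolding A0_def .
    obtain i d m A1 where id: "(i, d) \<in> Conf" "d \<in> hm X A1" "A1 \<in> A" "m \<in> hm A1 A0" "m \<cdot> d = q \<cdot> f" "is_mono E m"
      by (rule sP2[OF comp_hom[OF fh qh] A0A])
    define K where "K = Dom E i"
    have ih: "i \<in> hm K X" using confD[OF id(1)] id(2) unfolding K_def hom_def by auto
    have iS: "i \<in> S" using S_infl[OF id(1)] id(2,3) unfolding hom_def by auto
    have O: "K \<in> Obj E" "A1 \<in> Obj E" "A0 \<in> Obj E" "W0 \<in> Obj E" "V \<in> Obj E" using hom_obj ih id(2) qh h th by blast+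
    have di: "d \<cdot> i = Z K A1" using conf_hom[OF id(1) ih] id(2) unfolding hom_def by auto
    have qt: "q \<cdot> t = Z V A0" using conf_hom[OF tq(1) th] qh unfolding hom_def by auto
    have "q \<cdot> (f \<cdot> i) = (q \<cdot> f) \<cdot> i" using assoc[OF ih fh qh] .
    also have "\<dots> = m \<cdot> (d \<cdot> i)" using id(5) assoc[OF ih id(2) id(4)] by simp
    also have "\<dots> = Z K A0" using di comp_zero_r[OF id(4) O(1)] by simp
    finally obtain e' where e': "e' \<in> hm K V" "t \<cdot> e' = f \<cdot> i"
      using ker_lift[OF tq(1) th qh comp_hom[OF ih fh]] by blast
    have "m \<cdot> (d \<cdot> h) = (q \<cdot> f) \<cdot> h" using id(5) assoc[OF h id(2) id(4)] by simp
    also have "\<dots> = q \<cdot> (t \<cdot> r)" using e assoc[OF h fh qh] by simp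
    also have "\<dots> = Z W0 A0" using assoc[OF rh th qh] qt comp_zero_l[OF rh O(3)] by simp
    also have "\<dots> = m \<cdot> Z W0 A1" using comp_zero_r[OF id(4) O(4)] by simp
    finally have "d \<cdot> h = Z W0 A1" using mono_canc[OF id(6) id(4) comp_hom[OF h id(2)] zero_hom[OF O(4,2)]] by blast
    then obtain c where c: "c \<in> hm W0 K" "i \<cdot> c = h" using ker_lift[OF id(1) ih id(2) h] by blast
    have "t \<cdot> (e' \<cdot> c) = (f \<cdot> i) \<cdot> c" using e'(2) assoc[OF c(1) e'(1) th] by simp
    also have "\<dots> = t \<cdot> r" using c(2) e assoc[OF c(1) ih fh] by simp
    finally have "e' \<cdot> c = r" using ker_mono[OF tq(1) th comp_hom[OF c(1) e'(1)] rh] by blast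
    then show "\<exists>K s f' c. s \<in> S \<and> s \<in> hm K X \<and> f' \<in> hm K (Dom E t) \<and> c \<in> hm W0 K \<and> f \<cdot> s = t \<cdot> f' \<and> f' \<cdot> c = r"
      using iS ih e' c unfolding V_def by metis
  qed
next
  case (defl t)
  then obtain k where kt: "(k, t) \<in> Conf" "Dom E k \<in> A" unfolding A_deflation_def by blast
  show ?case
  proof (intro allI impI)
    fix X f h r W0 assume f: "f \<in> hm X (Cod E t)" and h: "h \<in> hm W0 X" and r: "r \<in> hm W0 (Dom E t)" and e: "f \<cdot> h = t \<cdot> r"
    have th: "t \<in> hm (Dom E t) (Cod E t)" using confD(2)[OF kt(1)] confD(1)[OF kt(1)] unfolding hom_def by auto
    obtain P s' g' where pb: "s' \<in> S" "s' \<in> hm P X" "g' \<in> hm P (Dom E t)" "t \<cdot> g' = f \<cdot> s'"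
      "\<And>T r h. r \<in> hm T (Dom E t) \<Longrightarrow> h \<in> hm T X \<Longrightarrow> t \<cdot> r = f \<cdot> h \<Longrightarrow> \<exists>c\<in>hm T P. g' \<cdot> c = r \<and> s' \<cdot> c = h"
      by (rule defl_pb[OF kt th f]) blast
    obtain c where c: "c \<in> hm W0 P" "g' \<cdot> c = r" "s' \<cdot> c = h" using pb(5)[OF r h e[symmetric]] by blast
    show "\<exists>K s f' c. s \<in> S \<and> s \<in> hm K X \<and> f' \<in> hm K (Dom E t) \<and> c \<in> hm W0 K \<and> f \<cdot> s = t \<cdot> f' \<and> f' \<cdot> c = r"
      using pb(1-4) c by metis
  qed
next
  case (comp s t)
  have sh: "s \<in> hm (Dom E s) (Dom E t)" using S_hom[OF comp.hyps(1)] comp.hyps(3) by simp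
  have th: "t \<in> hm (Dom E t) (Cod E t)" using S_hom[OF comp.hyps(2)] .
  have ts: "Dom E (t \<cdot> s) = Dom E s" "Cod E (t \<cdot> s) = Cod E t" using comp_hom[OF sh th] unfolding hom_def by auto
  show ?case
  proof (intro allI impI)
    fix X f h r W0 assume f: "f \<in> hm X (Cod E (t \<cdot> s))" and h: "h \<in> hm W0 X" and r: "r \<in> hm W0 (Dom E (t \<cdot> s))"
      and e: "f \<cdot> h = (t \<cdot> s) \<cdot> r"
    have f': "f \<in> hm X (Cod E t)" and r': "r \<in> hm W0 (Dom E s)" using f r ts by auto
    have sr: "s \<cdot> r \<in> hm W0 (Dom E t)" using comp_hom[OF r' sh] .
    have e': "f \<cdot> h = t \<cdot> (s \<cdot> r)" using e assoc[OF r' sh th] by simp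
    obtain K2 s2 f2 c2 where 2: "s2 \<in> S" "s2 \<in> hm K2 X" "f2 \<in> hm K2 (Dom E t)" "c2 \<in> hm W0 K2" "f \<cdot> s2 = t \<cdot> f2" "f2 \<cdot> c2 = s \<cdot> r"
      using comp.IH(2) f' h sr e' by blast
    have f2': "f2 \<in> hm K2 (Cod E s)" using 2(3) comp.hyps(3) by simp
    obtain K1 s1 f1 c1 where 1: "s1 \<in> S" "s1 \<in> hm K1 K2" "f1 \<in> hm K1 (Dom E s)" "c1 \<in> hm W0 K1" "f2 \<cdot> s1 = s \<cdot> f1" "f1 \<cdot> c1 = r"
      using comp.IH(1) f2' 2(4) r' 2(6) by blast
    have "f \<cdot> (s2 \<cdot> s1) = (t \<cdot> f2) \<cdot> s1" using 2(5) assoc[OF 1(2) 2(2) f'] by simp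
    also have "\<dots> = t \<cdot> (s \<cdot> f1)" using 1(5) assoc[OF 1(2) 2(3) th] by simp
    also have "\<dots> = (t \<cdot> s) \<cdot> f1" using assoc[OF 1(3) sh th] by simp
    finally have eq: "f \<cdot> (s2 \<cdot> s1) = (t \<cdot> s) \<cdot> f1" .
    have "s2 \<cdot> s1 \<in> S" using S_comp[OF 1(1) 2(1) 1(2) 2(2)] .
    moreover have "s2 \<cdot> s1 \<in> hm K1 X" using comp_hom[OF 1(2) 2(2)] .
    moreover have "f1 \<in> hm K1 (Dom E (t \<cdot> s))" using 1(3) ts by simp
    ultimately show "\<exists>K sa f' c. sa \<in> S \<and> sa \<in> hm K X \<and> f' \<in> hm K (Dom E (t \<cdot> s)) \<and> c \<in> hm W0 K \<and> f \<cdot> sa = (t \<cdot> s) \<cdot> f' \<and> f' \<cdot> c = r"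
      using eq 1(4) 1(6) by blast
  qed
qed


lemma P3: assumes "inflation Conf i" "deflation Conf p" "Dom E i = Dom E p" "Cod E p \<in> A"
  shows "\<exists>i' p'. is_pushout E p i i' p' \<and> inflation Conf i' \<and> deflation Conf p'"
proof -
  have "\<forall>i p. inflation Conf i \<longrightarrow> deflation Conf p \<longrightarrow> Dom E i = Dom E p \<longrightarrow> Cod E p \<in> A \<longrightarrow>
        (\<exists>i' p'. is_pushout E p i i' p' \<and> inflation Conf i' \<and> deflation Conf p')"
    using SP unfolding strongly_right_percolating_def right_percolating_def by blast
  then show ?thesis using assms by blast
qed

lemma P4: assumes "inflation Conf i" "deflation Conf p" "Cod E i = Dom E p" "Dom E i \<in> A" "Cod E p \<in> A"
  shows "\<exists>d1 d2 j m. deflation Conf d1 \<and> deflation Conf d2 \<and> inflation Conf j \<and> m \<in> Arr E \<and>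
           Dom E d1 = Dom E i \<and> Cod E d1 \<in> A \<and> Dom E d2 = Cod E i \<and> Cod E d2 \<in> A \<and>
           Dom E j = Cod E d1 \<and> Cod E j = Cod E d2 \<and>
           Dom E m = Cod E d2 \<and> Cod E m = Cod E p \<and>
           d2 \<cdot> i = j \<cdot> d1 \<and> p = m \<cdot> d2"
proof -
  have "\<forall>i p. inflation Conf i \<longrightarrow> deflation Conf p \<longrightarrow> Cod E i = Dom E p \<longrightarrow>
        Dom E i \<in> A \<longrightarrow> Cod E p \<in> A \<longrightarrow>
        (\<exists>d1 d2 j m. deflation Conf d1 \<and> deflation Conf d2 \<and> inflation Conf j \<and> m \<in> Arr E \<and>
           Dom E d1 = Dom E i \<and> Cod E d1 \<in> A \<and> Dom E d2 = Cod E i \<and> Cod E d2 \<in> A \<and>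
           Dom E j = Cod E d1 \<and> Cod E j = Cod E d2 \<and>
           Dom E m = Cod E d2 \<and> Cod E m = Cod E p \<and>
           d2 \<cdot> i = j \<cdot> d1 \<and> p = m \<cdot> d2)"
    using SP unfolding strongly_right_percolating_def right_percolating_def by blast
  then show ?thesis using assms by blast
qed

definition fa where "fa \<phi> X T \<longleftrightarrow> (\<exists>A0 a b. A0 \<in> A \<and> b \<in> hm X A0 \<and> a \<in> hm A0 T \<and> \<phi> = a \<cdot> b)"

lemma ext_inf: assumes "(u, q) \<in> Conf" "Cod E q \<in> A" "\<phi> \<in> hm (Cod E u) T" "fa (\<phi> \<cdot> u) (Dom E u) T"
  shows "fa \<phi> (Cod E u) T"
proof -
  define V where "V = Dom E u"
  define K where "K = Cod E u"
  define A0 where "A0 = Cod E q"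
  have uh: "u \<in> hm V K" using confD(1)[OF assms(1)] unfolding V_def K_def .
  have qh: "q \<in> hm K A0" using confD(2)[OF assms(1)] unfolding K_def A0_def .
  have \<phi>h: "\<phi> \<in> hm K T" using assms(3) unfolding K_def .
  obtain A' a b where ab: "A' \<in> A" "b \<in> hm V A'" "a \<in> hm A' T" "\<phi> \<cdot> u = a \<cdot> b"
    using assms(4) unfolding fa_def V_def by blast
  obtain i d m A1 where id: "(i, d) \<in> Conf" "d \<in> hm V A1" "A1 \<in> A" "m \<in> hm A1 A'" "m \<cdot> d = b" "is_mono E m"
    by (rule sP2[OF ab(2) ab(1)])
  have "\<exists>i' p'. is_pushout E d u i' p' \<and> inflation Conf i' \<and> deflation Conf p'"
    by (rule P3[OF infl_I[OF assms(1)] defl_I[OF id(1)]]) (use uh id(2,3) in \<open>auto simp: hom_def\<close>)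
  then obtain i' p' c' k' where po: "is_pushout E d u i' p'" "(i', c') \<in> Conf" "(k', p') \<in> Conf"
    unfolding inflation_def deflation_def by blast
  note pf = pushout_facts[OF po(1)]
  define P where "P = Cod E i'"
  have i'h: "i' \<in> hm A1 P" using pf id(2) unfolding P_def hom_def by auto
  have p'h: "p' \<in> hm K P" using pf uh unfolding P_def hom_def by auto
  have sq: "i' \<cdot> d = p' \<cdot> u" using pf by simp
  define C where "C = Cod E c'"
  have c'h: "c' \<in> hm P C" using confD(2)[OF po(2)] unfolding P_def C_def .
  have O: "V \<in> Obj E" "K \<in> Obj E" "A0 \<in> Obj E" "A1 \<in> Obj E" "P \<in> Obj E" "C \<in> Obj E" "T \<in> Obj E"
    using hom_obj uh qh i'h c'h \<phi>h by blast+
  have "\<exists>!h. h \<in> hom E (Cod E i') (Cod E (a \<cdot> m)) \<and> h \<cdot> i' = a \<cdot> m \<and> h \<cdot> p' = \<phi>"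
  proof (rule po_univ[OF po(1)])
    show "(a \<cdot> m) \<cdot> d = \<phi> \<cdot> u" using ab(4) id(5) assoc[OF id(2) id(4) ab(3)] by simp
  qed (use comp_hom[OF id(4) ab(3)] \<phi>h id(2) uh in \<open>auto simp: hom_def\<close>)
  then obtain \<alpha> where \<alpha>: "\<alpha> \<in> hm P T" "\<alpha> \<cdot> p' = \<phi>"
    using comp_hom[OF id(4) ab(3)] unfolding P_def hom_def by auto
  have ci: "c' \<cdot> i' = Z A1 C" using conf_hom[OF po(2) i'h] c'h unfolding hom_def by auto
  have qu: "q \<cdot> u = Z V A0" using conf_hom[OF assms(1) uh] qh unfolding hom_def by auto
  have "(c' \<cdot> p') \<cdot> u = c' \<cdot> (i' \<cdot> d)" using sq assoc[OF uh p'h c'h] by simp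
  also have "\<dots> = Z V C" using assoc[OF id(2) i'h c'h] ci comp_zero_l[OF id(2) O(6)] by simp
  finally obtain \<zeta> where \<zeta>: "\<zeta> \<in> hm A0 C" "\<zeta> \<cdot> q = c' \<cdot> p'"
    using cok_desc[OF assms(1) uh qh comp_hom[OF p'h c'h]] by blast
  have "\<exists>!h. h \<in> hom E (Cod E i') (Cod E (Z A1 A0)) \<and> h \<cdot> i' = Z A1 A0 \<and> h \<cdot> p' = q"
  proof (rule po_univ[OF po(1)])
    show "Z A1 A0 \<cdot> d = q \<cdot> u" using qu comp_zero_l[OF id(2) O(3)] by simp
  qed (use zero_hom[OF O(4,3)] qh id(2) uh in \<open>auto simp: hom_def\<close>)
  then obtain \<eta> where \<eta>: "\<eta> \<in> hm P A0" "\<eta> \<cdot> i' = Z A1 A0" "\<eta> \<cdot> p' = q"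
    using zero_hom[OF O(4,3)] unfolding P_def hom_def by auto
  obtain \<xi> where \<xi>: "\<xi> \<in> hm C A0" "\<xi> \<cdot> c' = \<eta>" using cok_desc[OF po(2) i'h c'h \<eta>(1,2)] by blast
  have "(\<xi> \<cdot> \<zeta>) \<cdot> q = Id E A0 \<cdot> q"
  proof -
    have "(\<xi> \<cdot> \<zeta>) \<cdot> q = \<xi> \<cdot> (c' \<cdot> p')" using \<zeta>(2) assoc[OF qh \<zeta>(1) \<xi>(1)] by simp
    also have "\<dots> = q" using assoc[OF p'h c'h \<xi>(1)] \<xi>(2) \<eta>(3) by simp
    finally show ?thesis using qh by simp
  qed
  then have 1: "\<xi> \<cdot> \<zeta> = Id E A0" using cok_epi[OF assms(1) qh comp_hom[OF \<zeta>(1) \<xi>(1)] id_hom[OF O(3)]] by blast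
  have "(\<zeta> \<cdot> \<eta>) \<cdot> p' = c' \<cdot> p'" using assoc[OF p'h \<eta>(1) \<zeta>(1)] \<eta>(3) \<zeta>(2) by simp
  then have "\<zeta> \<cdot> \<eta> = c'" using cok_epi[OF po(3) p'h comp_hom[OF \<eta>(1) \<zeta>(1)] c'h] by blast
  then have "(\<zeta> \<cdot> \<xi>) \<cdot> c' = Id E C \<cdot> c'" using assoc[OF c'h \<xi>(1) \<zeta>(1)] \<xi>(2) c'h by simp
  then have 2: "\<zeta> \<cdot> \<xi> = Id E C" using cok_epi[OF po(2) c'h comp_hom[OF \<xi>(1) \<zeta>(1)] id_hom[OF O(6)]] by blast
  have "is_iso E \<zeta>" using iso_I[OF \<zeta>(1) \<xi>(1) 1 2] .
  then have CA: "C \<in> A" using iso_A[OF _ \<zeta>(1)] assms(2) unfolding A0_def by blast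
  have "Dom E i' = A1" using i'h unfolding hom_def by simp
  then have "P \<in> A" using P1[OF po(2)] CA id(3) unfolding P_def C_def by simp
  then show ?thesis unfolding fa_def K_def using p'h \<alpha> unfolding K_def by metis
qed

lemma ext_defl: assumes "(k, u) \<in> Conf" "Dom E k \<in> A" "\<phi> \<in> hm (Cod E u) T" "fa (\<phi> \<cdot> u) (Dom E u) T"
  shows "fa \<phi> (Cod E u) T"
proof -
  define V where "V = Dom E u"
  define K where "K = Cod E u"
  define K0 where "K0 = Dom E k"
  have du: "Dom E u = Cod E k" using confD(2)[OF assms(1)] unfolding hom_def by simp
  have uh: "u \<in> hm V K" using confD(2)[OF assms(1)] du unfolding V_def K_def by simp
  have kh: "k \<in> hm K0 V" using confD(1)[OF assms(1)] du unfolding K0_def V_def by simp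
  have \<phi>h: "\<phi> \<in> hm K T" using assms(3) unfolding K_def .
  obtain A' a b where ab: "A' \<in> A" "b \<in> hm V A'" "a \<in> hm A' T" "\<phi> \<cdot> u = a \<cdot> b"
    using assms(4) unfolding fa_def V_def by blast
  obtain i d m A1 where id: "(i, d) \<in> Conf" "d \<in> hm V A1" "A1 \<in> A" "m \<in> hm A1 A'" "m \<cdot> d = b" "is_mono E m"
    by (rule sP2[OF ab(2) ab(1)])
  have "\<exists>d1 d2 j m'. deflation Conf d1 \<and> deflation Conf d2 \<and> inflation Conf j \<and> m' \<in> Arr E \<and>
           Dom E d1 = Dom E k \<and> Cod E d1 \<in> A \<and> Dom E d2 = Cod E k \<and> Cod E d2 \<in> A \<and>
           Dom E j = Cod E d1 \<and> Cod E j = Cod E d2 \<and>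
           Dom E m' = Cod E d2 \<and> Cod E m' = Cod E d \<and>
           d2 \<cdot> k = j \<cdot> d1 \<and> d = m' \<cdot> d2"
    by (rule P4[OF infl_I[OF assms(1)] defl_I[OF id(1)]]) (use kh id(2,3) assms(2) in \<open>auto simp: hom_def\<close>)
  then obtain d1 d2 j m' where P: "deflation Conf d1" "deflation Conf d2" "inflation Conf j" "m' \<in> Arr E"
           "Dom E d1 = K0" "Cod E d1 \<in> A" "Dom E d2 = V" "Cod E d2 \<in> A"
           "Dom E j = Cod E d1" "Cod E j = Cod E d2"
           "Dom E m' = Cod E d2" "Cod E m' = A1"
           "d2 \<cdot> k = j \<cdot> d1" "d = m' \<cdot> d2"
    using kh id(2) unfolding hom_def K0_def by auto
  obtain k1 where k1: "(k1, d1) \<in> Conf" using P(1) unfolding deflation_def by blast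
  obtain k2 where k2: "(k2, d2) \<in> Conf" using P(2) unfolding deflation_def by blast
  obtain cj where cj: "(j, cj) \<in> Conf" using P(3) unfolding inflation_def by blast
  define A2 where "A2 = Cod E d1"
  define B2 where "B2 = Cod E d2"
  define C where "C = Cod E cj"
  have d1h: "d1 \<in> hm K0 A2" using confD(2)[OF k1] P(5) unfolding A2_def hom_def by auto
  have d2h: "d2 \<in> hm V B2" using confD(2)[OF k2] P(7) unfolding B2_def hom_def by auto
  have jh: "j \<in> hm A2 B2" using confD(1)[OF cj] P(9,10) unfolding A2_def B2_def hom_def by auto
  have cjh: "cj \<in> hm B2 C" using confD(2)[OF cj] P(10) unfolding B2_def C_def hom_def by auto
  have m'h: "m' \<in> hm B2 A1" using P(4,11,12) unfolding B2_def hom_def by auto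
  have O: "V \<in> Obj E" "K \<in> Obj E" "K0 \<in> Obj E" "A2 \<in> Obj E" "B2 \<in> Obj E" "C \<in> Obj E" "T \<in> Obj E"
    using hom_obj uh kh d1h jh cjh \<phi>h by blast+
  have CA: "C \<in> A" using P1[OF cj] P(8) confD(1)[OF cj] jh unfolding C_def B2_def hom_def by auto
  have uk: "u \<cdot> k = Z K0 K" using conf_hom[OF assms(1) kh] uh unfolding hom_def by auto
  have cjj: "cj \<cdot> j = Z A2 C" using conf_hom[OF cj jh] cjh unfolding hom_def by auto
  define g where "g = a \<cdot> (m \<cdot> m')"
  have mm: "m \<cdot> m' \<in> hm B2 A'" using comp_hom[OF m'h id(4)] .
  have gh: "g \<in> hm B2 T" unfolding g_def using comp_hom[OF mm ab(3)] .
  have gd2: "g \<cdot> d2 = \<phi> \<cdot> u"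
  proof -
    have "g \<cdot> d2 = a \<cdot> ((m \<cdot> m') \<cdot> d2)" unfolding g_def using assoc[OF d2h mm ab(3)] by simp
    also have "\<dots> = a \<cdot> (m \<cdot> (m' \<cdot> d2))" using assoc[OF d2h m'h id(4)] by simp
    also have "\<dots> = \<phi> \<cdot> u" using P(14) id(5) ab(4) by simp
    finally show ?thesis .
  qed
  have "(g \<cdot> j) \<cdot> d1 = (g \<cdot> d2) \<cdot> k" using P(13) assoc[OF d1h jh gh] assoc[OF kh d2h gh] by simp
  also have "\<dots> = \<phi> \<cdot> (u \<cdot> k)" using gd2 assoc[OF kh uh \<phi>h] by simp
  also have "\<dots> = Z K0 T" using uk comp_zero_r[OF \<phi>h O(3)] by simp
  also have "\<dots> = Z A2 T \<cdot> d1" using comp_zero_l[OF d1h O(7)] by simp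
  finally have "g \<cdot> j = Z A2 T" using cok_epi[OF k1 d1h comp_hom[OF jh gh] zero_hom[OF O(4,7)]] by blast
  then obtain \<psi>' where \<psi>': "\<psi>' \<in> hm C T" "\<psi>' \<cdot> cj = g" using cok_desc[OF cj jh cjh gh] by blast
  have "(cj \<cdot> d2) \<cdot> k = (cj \<cdot> j) \<cdot> d1" using P(13) assoc[OF kh d2h cjh] assoc[OF d1h jh cjh] by simp
  also have "\<dots> = Z K0 C" using cjj comp_zero_l[OF d1h O(6)] by simp
  finally obtain \<psi> where \<psi>: "\<psi> \<in> hm K C" "\<psi> \<cdot> u = cj \<cdot> d2"
    using cok_desc[OF assms(1) kh uh comp_hom[OF d2h cjh]] by blast
  have "(\<psi>' \<cdot> \<psi>) \<cdot> u = \<phi> \<cdot> u" using assoc[OF uh \<psi>(1) \<psi>'(1)] \<psi>(2) assoc[OF d2h cjh \<psi>'(1)] \<psi>'(2) gd2 by simp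
  then have "\<psi>' \<cdot> \<psi> = \<phi>" using cok_epi[OF assms(1) uh comp_hom[OF \<psi>(1) \<psi>'(1)] \<phi>h] by blast
  then show ?thesis unfolding fa_def K_def using CA \<psi> \<psi>' unfolding K_def by metis
qed

lemma ext_aux: assumes "u \<in> S"
  shows "\<forall>T \<phi>. \<phi> \<in> hm (Cod E u) T \<longrightarrow> fa (\<phi> \<cdot> u) (Dom E u) T \<longrightarrow> fa \<phi> (Cod E u) T"
  using assms
proof (induction rule: S_A.induct)
  case (inf u) then show ?case using ext_inf unfolding A_inflation_def by blast
next
  case (defl u) then show ?case using ext_defl unfolding A_deflation_def by blast
next
  case (comp s t)
  have sh: "s \<in> hm (Dom E s) (Dom E t)" using S_hom[OF comp.hyps(1)] comp.hyps(3) by simp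
  have th: "t \<in> hm (Dom E t) (Cod E t)" using S_hom[OF comp.hyps(2)] .
  have ts: "Dom E (t \<cdot> s) = Dom E s" "Cod E (t \<cdot> s) = Cod E t" using comp_hom[OF sh th] unfolding hom_def by auto
  show ?case
  proof (intro allI impI)
    fix T \<phi> assume \<phi>: "\<phi> \<in> hm (Cod E (t \<cdot> s)) T" and f: "fa (\<phi> \<cdot> (t \<cdot> s)) (Dom E (t \<cdot> s)) T"
    have \<phi>': "\<phi> \<in> hm (Cod E t) T" using \<phi> ts by simp
    have "fa ((\<phi> \<cdot> t) \<cdot> s) (Dom E s) T" using f ts assoc[OF sh th \<phi>'] by simp
    moreover have "\<phi> \<cdot> t \<in> hm (Cod E s) T" using comp_hom[OF th \<phi>'] comp.hyps(3) by simp
    ultimately have "fa (\<phi> \<cdot> t) (Cod E s) T" using comp.IH(1) by blast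
    then have "fa (\<phi> \<cdot> t) (Dom E t) T" using comp.hyps(3) by simp
    then have "fa \<phi> (Cod E t) T" using comp.IH(2) \<phi>' by blast
    then show "fa \<phi> (Cod E (t \<cdot> s)) T" using ts by simp
  qed
qed

lemma z_aux: assumes "u \<in> S"
  shows "\<forall>T \<phi>. \<phi> \<in> hm (Cod E u) T \<longrightarrow> \<phi> \<cdot> u = Z (Dom E u) T \<longrightarrow> fa \<phi> (Cod E u) T"
  using assms
proof (induction rule: S_A.induct)
  case (inf u)
  then obtain q where uq: "(u, q) \<in> Conf" "Cod E q \<in> A" unfolding A_inflation_def by blast
  show ?case
  proof (intro allI impI)
    fix T \<phi> assume \<phi>: "\<phi> \<in> hm (Cod E u) T" and z: "\<phi> \<cdot> u = Z (Dom E u) T"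
    obtain c where "c \<in> hm (Cod E q) T" "c \<cdot> q = \<phi>"
      using cok_desc[OF uq(1) confD(1)[OF uq(1)] confD(2)[OF uq(1)] \<phi> z] by blast
    then show "fa \<phi> (Cod E u) T" unfolding fa_def using uq(2) confD(2)[OF uq(1)] by metis
  qed
next
  case (defl u)
  then obtain k where ku: "(k, u) \<in> Conf" "Dom E k \<in> A" unfolding A_deflation_def by blast
  show ?case
  proof (intro allI impI)
    fix T \<phi> assume \<phi>: "\<phi> \<in> hm (Cod E u) T" and z: "\<phi> \<cdot> u = Z (Dom E u) T"
    have uh: "u \<in> hm (Dom E u) (Cod E u)" using confD(2)[OF ku(1)] confD(1)[OF ku(1)] unfolding hom_def by auto
    have O: "T \<in> Obj E" "Cod E u \<in> Obj E" "Dom E u \<in> Obj E" using hom_obj \<phi> uh by blast+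
    have "\<phi> \<cdot> u = Z (Cod E u) T \<cdot> u" using z comp_zero_l[OF uh O(1)] by simp
    then have \<phi>0: "\<phi> = Z (Cod E u) T" using cok_epi[OF ku(1) uh \<phi> zero_hom[OF O(2,1)]] by blast
    obtain z0 where z0: "zl z0" "z0 \<in> A" by (rule zl_ex)
    have zO: "z0 \<in> Obj E" using zl_obj[OF z0(1)] .
    have "Z z0 T \<cdot> Z (Cod E u) z0 = Z (Cod E u) T" using comp_zero_l[OF zero_hom[OF O(2) zO] O(1)] .
    then show "fa \<phi> (Cod E u) T" unfolding fa_def using \<phi>0 z0(2) zero_hom[OF O(2) zO] zero_hom[OF zO O(1)] by metis
  qed
next
  case (comp s t)
  have sh: "s \<in> hm (Dom E s) (Dom E t)" using S_hom[OF comp.hyps(1)] comp.hyps(3) by simp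
  have th: "t \<in> hm (Dom E t) (Cod E t)" using S_hom[OF comp.hyps(2)] .
  have ts: "Dom E (t \<cdot> s) = Dom E s" "Cod E (t \<cdot> s) = Cod E t" using comp_hom[OF sh th] unfolding hom_def by auto
  show ?case
  proof (intro allI impI)
    fix T \<phi> assume \<phi>: "\<phi> \<in> hm (Cod E (t \<cdot> s)) T" and z: "\<phi> \<cdot> (t \<cdot> s) = Z (Dom E (t \<cdot> s)) T"
    have \<phi>': "\<phi> \<in> hm (Cod E t) T" using \<phi> ts by simp
    have "(\<phi> \<cdot> t) \<cdot> s = Z (Dom E s) T" using z ts assoc[OF sh th \<phi>'] by simp
    moreover have "\<phi> \<cdot> t \<in> hm (Cod E s) T" using comp_hom[OF th \<phi>'] comp.hyps(3) by simp
    ultimately have "fa (\<phi> \<cdot> t) (Cod E s) T" using comp.IH(1) by blast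
    then have "fa (\<phi> \<cdot> t) (Dom E t) T" using comp.hyps(3) by simp
    then have "fa \<phi> (Cod E t) T" using ext_aux[OF comp.hyps(2)] \<phi>' by blast
    then show "fa \<phi> (Cod E (t \<cdot> s)) T" using ts by simp
  qed
qed


lemma neg_comp_r: assumes "b \<in> hm X Y" "h \<in> hm V X" shows "(ng b) \<cdot> h = ng (b \<cdot> h)"
proof -
  have nb: "ng b \<in> hm X Y" using neg_hom[OF assms(1)] .
  have VO: "V \<in> Obj E" "Y \<in> Obj E" using hom_obj assms by blast+
  have "b \<cdot> h \<oplus> (ng b) \<cdot> h = (b \<oplus> ng b) \<cdot> h" using distr[OF assms(2) assms(1) nb] by simp
  also have "\<dots> = Z V Y" using add_neg[OF assms(1)] comp_zero_l[OF assms(2) VO(2)] by simp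
  finally show ?thesis using neg_unique[OF comp_hom[OF assms(2,1)] comp_hom[OF assms(2) nb]] by simp
qed

lemma comp_sub_zero_r: assumes "a \<in> hm X Y" "b \<in> hm X Y" "h \<in> hm V X" "a \<cdot> h = b \<cdot> h"
  shows "(a \<oplus> ng b) \<cdot> h = Z V Y"
proof -
  have nb: "ng b \<in> hm X Y" using neg_hom[OF assms(2)] .
  have "(a \<oplus> ng b) \<cdot> h = a \<cdot> h \<oplus> (ng b) \<cdot> h" using distr[OF assms(3) assms(1) nb] .
  also have "\<dots> = b \<cdot> h \<oplus> ng (b \<cdot> h)" using assms(4) neg_comp_r[OF assms(2,3)] by simp
  also have "\<dots> = Z V Y" using add_neg[OF comp_hom[OF assms(3,2)]] .
  finally show ?thesis .
qed

lemma add_back: assumes "x \<in> hm X Y" "y \<in> hm X Y" shows "x \<oplus> (y \<oplus> ng x) = y"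
proof -
  have nx: "ng x \<in> hm X Y" using neg_hom[OF assms(1)] .
  have "x \<oplus> (y \<oplus> ng x) = x \<oplus> (ng x \<oplus> y)" using add_comm[OF assms(2) nx] by simp
  also have "\<dots> = (x \<oplus> ng x) \<oplus> y" using add_assoc[OF assms(1) nx assms(2)] by simp
  also have "\<dots> = y" using add_neg[OF assms(1)] zero_add[OF assms(2)] by simp
  finally show ?thesis .
qed

lemma crux: assumes "e \<in> hm K W" "c \<in> hm W K" "e \<cdot> c = Id E W" "b \<in> hm K A0" "A0 \<in> A" "a \<in> hm A0 K"
  "c \<cdot> e \<oplus> a \<cdot> b = Id E K"
  obtains V u where "u \<in> S" "u \<in> hm V K" "e \<cdot> u \<in> S"
proof -
  obtain i d m A1 where id: "(i, d) \<in> Conf" "d \<in> hm K A1" "A1 \<in> A" "m \<in> hm A1 A0" "m \<cdot> d = b" "is_mono E m"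
    by (rule sP2[OF assms(4,5)])
  define V where "V = Dom E i"
  have ih: "i \<in> hm V K" using confD[OF id(1)] id(2) unfolding V_def hom_def by auto
  have iS: "i \<in> S" using S_infl[OF id(1)] id(2,3) unfolding hom_def by auto
  have O: "V \<in> Obj E" "K \<in> Obj E" "W \<in> Obj E" "A0 \<in> Obj E" "A1 \<in> Obj E" using hom_obj ih assms(1) assms(4) id(2) by blast+
  have di: "d \<cdot> i = Z V A1" using conf_hom[OF id(1) ih] id(2) unfolding hom_def by auto
  have bi: "b \<cdot> i = Z V A0" using id(5) assoc[OF ih id(2) id(4)] di comp_zero_r[OF id(4) O(1)] by simp
  have ce: "c \<cdot> e \<in> hm K K" using comp_hom[OF assms(1,2)] .
  have ab: "a \<cdot> b \<in> hm K K" using comp_hom[OF assms(4,6)] .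
  have "i = Id E K \<cdot> i" using ih by simp
  also have "\<dots> = (c \<cdot> e) \<cdot> i \<oplus> (a \<cdot> b) \<cdot> i" using assms(7) distr[OF ih ce ab] by simp
  also have "\<dots> = c \<cdot> (e \<cdot> i) \<oplus> Z V K" using assoc[OF ih assms(1,2)] assoc[OF ih assms(4,6)] bi comp_zero_r[OF assms(6) O(1)] by simp
  also have "\<dots> = c \<cdot> (e \<cdot> i)" using add_zero[OF comp_hom[OF comp_hom[OF ih assms(1)] assms(2)]] .
  finally have cei: "c \<cdot> (e \<cdot> i) = i" by simp
  define x where "x = e \<cdot> i"
  have xh: "x \<in> hm V W" unfolding x_def using comp_hom[OF ih assms(1)] .
  have cx: "c \<cdot> x = i" using cei unfolding x_def .
  obtain k3 d3 m3 A3 where id3: "(k3, d3) \<in> Conf" "d3 \<in> hm W A3" "A3 \<in> A" "m3 \<in> hm A3 A0" "m3 \<cdot> d3 = b \<cdot> c" "is_mono E m3"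
    by (rule sP2[OF comp_hom[OF assms(2,4)] assms(5)])
  define K3 where "K3 = Dom E k3"
  have k3h: "k3 \<in> hm K3 W" using confD[OF id3(1)] id3(2) unfolding K3_def hom_def by auto
  have k3S: "k3 \<in> S" using S_infl[OF id3(1)] id3(2,3) unfolding hom_def by auto
  have O3: "K3 \<in> Obj E" "A3 \<in> Obj E" using hom_obj k3h id3(2) by blast+
  have "m3 \<cdot> (d3 \<cdot> x) = (b \<cdot> c) \<cdot> x" using id3(5) assoc[OF xh id3(2) id3(4)] by simp
  also have "\<dots> = Z V A0" using assoc[OF xh assms(2,4)] cx bi by simp
  also have "\<dots> = m3 \<cdot> Z V A3" using comp_zero_r[OF id3(4) O(1)] by simp
  finally have "d3 \<cdot> x = Z V A3" using mono_canc[OF id3(6) id3(4) comp_hom[OF xh id3(2)] zero_hom[OF O(1) O3(2)]] by blast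
  then obtain \<iota> where \<iota>: "\<iota> \<in> hm V K3" "k3 \<cdot> \<iota> = x" using ker_lift[OF id3(1) k3h id3(2) xh] by blast
  have d3k3: "d3 \<cdot> k3 = Z K3 A3" using conf_hom[OF id3(1) k3h] id3(2) unfolding hom_def by auto
  have "m \<cdot> (d \<cdot> (c \<cdot> k3)) = (b \<cdot> c) \<cdot> k3" using id(5) assoc[OF comp_hom[OF k3h assms(2)] id(2) id(4)] assoc[OF k3h assms(2,4)] by simp
  also have "\<dots> = m3 \<cdot> (d3 \<cdot> k3)" using id3(5) assoc[OF k3h id3(2) id3(4)] by simp
  also have "\<dots> = Z K3 A0" using d3k3 comp_zero_r[OF id3(4) O3(1)] by simp
  also have "\<dots> = m \<cdot> Z K3 A1" using comp_zero_r[OF id(4) O3(1)] by simp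
  finally have "d \<cdot> (c \<cdot> k3) = Z K3 A1"
    using mono_canc[OF id(6) id(4) comp_hom[OF comp_hom[OF k3h assms(2)] id(2)] zero_hom[OF O3(1) O(5)]] by blast
  then obtain \<kappa> where \<kappa>: "\<kappa> \<in> hm K3 V" "i \<cdot> \<kappa> = c \<cdot> k3" using ker_lift[OF id(1) ih id(2) comp_hom[OF k3h assms(2)]] by blast
  have x\<kappa>: "x \<cdot> \<kappa> = k3"
  proof -
    have "x \<cdot> \<kappa> = e \<cdot> (i \<cdot> \<kappa>)" unfolding x_def using assoc[OF \<kappa>(1) ih assms(1)] by simp
    also have "\<dots> = (e \<cdot> c) \<cdot> k3" using \<kappa>(2) assoc[OF k3h assms(2) assms(1)] by simp
    also have "\<dots> = k3" using assms(3) k3h by simp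
    finally show ?thesis .
  qed
  have "k3 \<cdot> (\<iota> \<cdot> \<kappa>) = k3 \<cdot> Id E K3" using assoc[OF \<kappa>(1) \<iota>(1) k3h] \<iota>(2) x\<kappa> k3h by simp
  then have 1: "\<iota> \<cdot> \<kappa> = Id E K3" using ker_mono[OF id3(1) k3h comp_hom[OF \<kappa>(1) \<iota>(1)] id_hom[OF O3(1)]] by blast
  have "i \<cdot> (\<kappa> \<cdot> \<iota>) = c \<cdot> (k3 \<cdot> \<iota>)" using assoc[OF \<iota>(1) \<kappa>(1) ih] \<kappa>(2) assoc[OF \<iota>(1) k3h assms(2)] by simp
  also have "\<dots> = i \<cdot> Id E V" using \<iota>(2) cx ih by simp
  finally have 2: "\<kappa> \<cdot> \<iota> = Id E V" using ker_mono[OF id(1) ih comp_hom[OF \<iota>(1) \<kappa>(1)] id_hom[OF O(1)]] by blast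
  have "is_iso E \<iota>" using iso_I[OF \<iota>(1) \<kappa>(1) 2 1] .
  then have "\<iota> \<in> S" using iso_S[OF _ \<iota>(1)] by blast
  then have "x \<in> S" using S_comp[OF _ k3S \<iota>(1) k3h] \<iota>(2) by simp
  then show ?thesis using that[OF iS ih] unfolding x_def by blast
qed


lemma main: "right_weakly_saturated E S"
  unfolding right_weakly_saturated_def
proof (intro ballI impI)
  fix f assume fA: "f \<in> Arr E" and L: "localization_iso E S f"
  define X where "X = Dom E f"
  define Y where "Y = Cod E f"
  have fh: "f \<in> hm X Y" using arr_hom[OF fA] unfolding X_def Y_def .
  obtain W0 h where h: "h \<in> hm W0 X" "f \<cdot> h \<in> S" by (rule ext1[OF L fh])
  define t where "t = f \<cdot> h"
  have th: "t \<in> hm W0 Y" unfolding t_def using comp_hom[OF h(1) fh] .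
  have tS: "t \<in> S" using h(2) unfolding t_def .
  have O: "W0 \<in> Obj E" using hom_obj[OF h(1)] by blast
  have d: "Cod E t = Y" "Dom E t = W0" using th unfolding hom_def by auto
  have "\<exists>K s f' c. s \<in> S \<and> s \<in> hm K X \<and> f' \<in> hm K (Dom E t) \<and> c \<in> hm W0 K \<and> f \<cdot> s = t \<cdot> f' \<and> f' \<cdot> c = Id E W0"
  proof (rule peel_aux[OF tS, rule_format])
    show "f \<in> hm X (Cod E t)" using fh d by simp
    show "h \<in> hm W0 X" by fact
    show "Id E W0 \<in> hm W0 (Dom E t)" using id_hom[OF O] d by simp
    show "f \<cdot> h = t \<cdot> Id E W0" using th unfolding t_def by simp
  qed
  then obtain K s f' c where P: "s \<in> S" "s \<in> hm K X" "f' \<in> hm K W0" "c \<in> hm W0 K" "f \<cdot> s = t \<cdot> f'" "f' \<cdot> c = Id E W0"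
    unfolding d by blast
  have L': "localization_iso E S f'" using loc_cancel[OF L fh P(1,2) tS th P(3,5)] .
  obtain V u where u: "u \<in> S" "u \<in> hm V K" "c \<cdot> (f' \<cdot> u) = u" by (rule ext2[OF L' P(3,4,6)])
  have KO: "K \<in> Obj E" using hom_obj[OF P(2)] by blast
  have cf: "c \<cdot> f' \<in> hm K K" using comp_hom[OF P(3,4)] .
  define \<pi> where "\<pi> = Id E K \<oplus> ng (c \<cdot> f')"
  have "Id E K \<cdot> u = (c \<cdot> f') \<cdot> u" using u(2,3) assoc[OF u(2) P(3,4)] by simp
  then have "\<pi> \<cdot> u = Z V K" unfolding \<pi>_def using comp_sub_zero_r[OF id_hom[OF KO] cf u(2)] by simp
  moreover have "\<pi> \<in> hm K K" unfolding \<pi>_def using add_hom[OF id_hom[OF KO] neg_hom[OF cf]] .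
  moreover have "Cod E u = K" "Dom E u = V" using u(2) unfolding hom_def by auto
  ultimately have "fa \<pi> K K" using z_aux[OF u(1)] by simp
  then obtain A0 a b where ab: "A0 \<in> A" "b \<in> hm K A0" "a \<in> hm A0 K" "\<pi> = a \<cdot> b" unfolding fa_def by blast
  have "c \<cdot> f' \<oplus> a \<cdot> b = Id E K" using ab(4) add_back[OF cf id_hom[OF KO]] unfolding \<pi>_def by simp
  then obtain V' u' where u': "u' \<in> S" "u' \<in> hm V' K" "f' \<cdot> u' \<in> S" by (rule crux[OF P(3,4,6) ab(2,1,3)])
  have "s \<cdot> u' \<in> S" using S_comp[OF u'(1) P(1) u'(2) P(2)] .
  moreover have "Cod E (s \<cdot> u') = Dom E f" using comp_hom[OF u'(2) P(2)] unfolding hom_def X_def by simp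
  moreover have "f \<cdot> (s \<cdot> u') \<in> S"
  proof -
    have "f \<cdot> (s \<cdot> u') = t \<cdot> (f' \<cdot> u')" using tail2[OF P(2) fh P(3) th P(5) u'(2)] .
    moreover have "t \<cdot> (f' \<cdot> u') \<in> S" using S_comp[OF u'(3) tS comp_hom[OF u'(2) P(3)] th] .
    ultimately show ?thesis by simp
  qed
  ultimately show "\<exists>s\<in>S. Cod E s = Dom E f \<and> f \<cdot> s \<in> S" by blast
qed

end

theorem proposition5p6:
  fixes E :: "('o, 'm) addcat" and Conf :: "('m \<times> 'm) set" and A :: "'o set"
  assumes "right_exact E Conf"
    and "strongly_right_percolating E Conf A"
  shows "right_weakly_saturated E (S_A E Conf A)"
proof -
  interpret rex E Conf A using assms by unfold_locales
  show ?thesis using main .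
qed


end
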